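(* Let $x_0\in\mathbb R^N$, $t_0>0$, and let $u$ be a $C^2$-solution of $(L_k-\partial_t^2)u=0$ ($L_k$ acting in $x$) defined in the cone $C(x_0,t_0)=\{(x,t)\in\mathbb R^N\times[0,\infty):|x-x_0|\le t_0-t\}$, satisfying $u(x,0)=u_t(x,0)=0$ for all $x$ with $|x-x_0|\le t_0$. Then $u$ vanishes identically in $C(x_0,t_0)$.
   Context: Let $R\subset\mathbb R^N$ be a reduced root system normalized by $\langle\alpha,\alpha\rangle=2$, $R_+$ a positive subsystem, and $k:R\to[0,\infty)$ a multiplicity function invariant under the reflection group of $R$. $w_k(x)=\prod_{\alpha\in R_+}|\langle\alpha,x\rangle|^{2k(\alpha)}$. $L_k$ is the operator $L_kf(x)=\Delta f(x)+2\sum_{\alpha\in R_+}k(\alpha)\frac{\langle\nabla f(x),\alpha\rangle}{\langle\alpha,x\rangle}$, equivalently $L_k=\frac1{w_k}\sum_{i=1}^N\partial_{x_i}(w_k\partial_{x_i})$. *)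

theory Defs
  imports "HOL-Analysis.Analysis"
begin

definition refl_root :: "'a::euclidean_space \<Rightarrow> 'a \<Rightarrow> 'a" where
  "refl_root \<alpha> x = x - ((2 * (\<alpha> \<bullet> x)) / (\<alpha> \<bullet> \<alpha>)) *\<^sub>R \<alpha>"

definition normalized_reduced_root_system :: "'a::euclidean_space set \<Rightarrow> bool" where
  "normalized_reduced_root_system R \<longleftrightarrow>
     finite R \<and> 0 \<notin> R \<and>
     (\<forall>\<alpha>\<in>R. \<forall>\<beta>\<in>R. refl_root \<alpha> \<beta> \<in> R) \<and>
     (\<forall>\<alpha>\<in>R. \<forall>c::real. c *\<^sub>R \<alpha> \<in> R \<longrightarrow> c = 1 \<or> c = -1) \<and>
     (\<forall>\<alpha>\<in>R. \<alpha> \<bullet> \<alpha> = 2)"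

definition positive_subsystem :: "'a::euclidean_space set \<Rightarrow> 'a set \<Rightarrow> bool" where
  "positive_subsystem R Rp \<longleftrightarrow>
     (\<exists>\<beta>. (\<forall>\<alpha>\<in>R. \<alpha> \<bullet> \<beta> \<noteq> 0) \<and> Rp = {\<alpha>\<in>R. \<alpha> \<bullet> \<beta> > 0})"

inductive_set reflection_group :: "'a::euclidean_space set \<Rightarrow> ('a \<Rightarrow> 'a) set"
  for R :: "'a set" where
  id_in: "id \<in> reflection_group R"
| refl_comp: "\<alpha> \<in> R \<Longrightarrow> g \<in> reflection_group R \<Longrightarrow> refl_root \<alpha> \<circ> g \<in> reflection_group R"

definition multiplicity_function :: "'a::euclidean_space set \<Rightarrow> ('a \<Rightarrow> real) \<Rightarrow> bool" where
  "multiplicity_function R k \<longleftrightarrow>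
     (\<forall>\<alpha>\<in>R. k \<alpha> \<ge> 0) \<and>
     (\<forall>g\<in>reflection_group R. \<forall>\<alpha>\<in>R. k (g \<alpha>) = k \<alpha>)"

definition light_cone :: "'a::euclidean_space \<Rightarrow> real \<Rightarrow> ('a \<times> real) set" where
  "light_cone x0 t0 = {(x, t). 0 \<le> t \<and> norm (x - x0) \<le> t0 - t}"

text \<open>(L_k - d_t^2) u at p = (x,t), expressed through the first and second
  Frechet derivatives Du p, D2u p of u (in all variables (x,t)).\<close>
definition dunkl_wave_op ::
  "'a::euclidean_space set \<Rightarrow> ('a \<Rightarrow> real) \<Rightarrow>
   (('a \<times> real) \<Rightarrow> ('a \<times> real) \<Rightarrow>\<^sub>L real) \<Rightarrow>
   (('a \<times> real) \<Rightarrow> ('a \<times> real) \<Rightarrow>\<^sub>L (('a \<times> real) \<Rightarrow>\<^sub>L real)) \<Rightarrow>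
   ('a \<times> real) \<Rightarrow> real" where
  "dunkl_wave_op Rp k Du D2u p =
     (\<Sum>b\<in>Basis. D2u p (b, 0) (b, 0))
     + 2 * (\<Sum>\<alpha>\<in>Rp. k \<alpha> * Du p (\<alpha>, 0) / (\<alpha> \<bullet> fst p))
     - D2u p (0, 1) (0, 1)"

end

theory Submission
  imports Defs
begin

lemma avoid_hyperplanes:
  fixes V :: "'a::euclidean_space set"
  assumes "finite B" "subspace V" "\<And>\<beta>. \<beta> \<in> B \<Longrightarrow> \<exists>v\<in>V. \<beta> \<bullet> v \<noteq> 0"
  shows "\<exists>v\<in>V. \<forall>\<beta>\<in>B. \<beta> \<bullet> v \<noteq> 0"
  using assms
proof (induction B rule: finite_induct)
  case empty
  then show ?case using subspace_0 by blast
next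
  case (insert b B)
  then obtain v where v: "v \<in> V" "\<forall>\<beta>\<in>B. \<beta> \<bullet> v \<noteq> 0" by blast
  obtain v' where v': "v' \<in> V" "b \<bullet> v' \<noteq> 0" using insert.prems by blast
  show ?case
  proof (cases "b \<bullet> v = 0")
    case False
    then show ?thesis using v by auto
  next
    case True
    have "finite (insert 0 ((\<lambda>\<beta>. - (\<beta> \<bullet> v) / (\<beta> \<bullet> v')) ` B))" using insert.hyps by simp
    then obtain c :: real where c: "c \<notin> insert 0 ((\<lambda>\<beta>. - (\<beta> \<bullet> v) / (\<beta> \<bullet> v')) ` B)"
      using ex_new_if_finite[OF infinite_UNIV_char_0] by blast
    have "v + c *\<^sub>R v' \<in> V" using v v' insert.prems(1) by (simp add: subspace_add subspace_scale)
    moreover have "\<forall>\<beta>\<in>insert b B. \<beta> \<bullet> (v + c *\<^sub>R v') \<noteq> 0"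
    proof
      fix \<beta> assume "\<beta> \<in> insert b B"
      then show "\<beta> \<bullet> (v + c *\<^sub>R v') \<noteq> 0"
      proof
        assume "\<beta> = b" then show ?thesis using True c v' by (simp add: inner_add_right)
      next
        assume b: "\<beta> \<in> B"
        show ?thesis
        proof (cases "\<beta> \<bullet> v' = 0")
          case True then show ?thesis using v b by (simp add: inner_add_right)
        next
          case False
          have "c \<noteq> - (\<beta> \<bullet> v) / (\<beta> \<bullet> v')" using c b by auto
          then show ?thesis using False by (simp add: inner_add_right field_simps)
        qed
      qed
    qed
    ultimately show ?thesis by blast
  qed
qed

lemma blinfun_apply_deriv:
  assumes "(F has_derivative blinfun_apply D) (at q within S)"
  shows "((\<lambda>q. blinfun_apply (F q) v) has_derivative (\<lambda>h. blinfun_apply (blinfun_apply D h) v)) (at q within S)"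
  using blinfun.FDERIV[OF assms has_derivative_const[of v]] by simp

lemma line_deriv_within:
  fixes f :: "'a::real_normed_vector \<Rightarrow> real"
  assumes "(f has_derivative f') (at (a + r *\<^sub>R k) within S)" "\<And>r'. r' \<in> X \<Longrightarrow> a + r' *\<^sub>R k \<in> S"
    "linear f'" "r \<in> X"
  shows "((\<lambda>r. f (a + r *\<^sub>R k)) has_real_derivative f' k) (at r within X)"
proof -
  have l: "((\<lambda>r. a + r *\<^sub>R k) has_derivative (\<lambda>x. x *\<^sub>R k)) (at r within X)"
    by (auto intro!: derivative_eq_intros)
  have s: "(\<lambda>r. a + r *\<^sub>R k) ` X \<subseteq> S" using assms(2) by auto
  have "(f has_derivative f') (at ((\<lambda>r. a + r *\<^sub>R k) r) within (\<lambda>r. a + r *\<^sub>R k) ` X)"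
    using has_derivative_subset[OF assms(1) s] by simp
  from diff_chain_within[OF l this]
  have "((\<lambda>r. f (a + r *\<^sub>R k)) has_derivative (\<lambda>x. f' (x *\<^sub>R k))) (at r within X)"
    by (simp add: o_def)
  moreover have "(\<lambda>x. f' (x *\<^sub>R k)) = (*) (f' k)"
    using assms(3) by (auto simp: linear_scale)
  ultimately show ?thesis unfolding has_field_derivative_def by simp
qed

lemma second_deriv_Delta:
  fixes u :: "'a::real_normed_vector \<Rightarrow> real"
  assumes ball: "ball p r \<subseteq> S" "norm h + norm k < r"
   and du: "\<And>q. q\<in>S \<Longrightarrow> (u has_derivative blinfun_apply (Du q)) (at q)"
   and d2: "\<And>q. q\<in>S \<Longrightarrow> (Du has_derivative blinfun_apply (D2 q)) (at q)"
  shows "\<exists>\<zeta>. norm (\<zeta> - p) \<le> norm h + norm k \<and> u (p+h+k) - u (p+h) - u (p+k) + u p = D2 \<zeta> h k"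
proof -
  have inb: "p + s *\<^sub>R k + \<sigma> *\<^sub>R h \<in> S" if "0 \<le> s" "s \<le> 1" "0 \<le> \<sigma>" "\<sigma> \<le> 1" for s \<sigma>
  proof -
    have "norm (s *\<^sub>R k + \<sigma> *\<^sub>R h) \<le> s * norm k + \<sigma> * norm h"
      using norm_triangle_ineq[of "s *\<^sub>R k" "\<sigma> *\<^sub>R h"] that by simp
    also have "\<dots> \<le> norm k + norm h"
      using that by (intro add_mono) (auto intro: mult_left_le_one_le)
    finally have "norm (s *\<^sub>R k + \<sigma> *\<^sub>R h) < r" using ball(2) by simp
    then have "p + (s *\<^sub>R k + \<sigma> *\<^sub>R h) \<in> ball p r" by (simp add: dist_norm norm_minus_commute add.commute)
    then show ?thesis using ball(1) by (auto simp: add.assoc)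
  qed
  define g where "g s = u (p + h + s *\<^sub>R k) - u (p + s *\<^sub>R k)" for s
  have dg: "(g has_real_derivative (Du (p + h + s *\<^sub>R k) k - Du (p + s *\<^sub>R k) k)) (at s)"
    if "0 \<le> s" "s \<le> 1" for s
  proof -
    have m1: "p + h + s *\<^sub>R k \<in> S" using inb[of s 1] that by (simp add: algebra_simps)
    have m2: "p + s *\<^sub>R k \<in> S" using inb[of s 0] that by simp
    have a1: "((\<lambda>s. u (p + h + s *\<^sub>R k)) has_real_derivative Du (p + h + s *\<^sub>R k) k) (at s within UNIV)"
      by (rule line_deriv_within[where S=UNIV]) (use du[OF m1] in \<open>auto intro: bounded_linear.linear[OF blinfun.bounded_linear_right]\<close>)
    have a2: "((\<lambda>s. u (p + s *\<^sub>R k)) has_real_derivative Du (p + s *\<^sub>R k) k) (at s within UNIV)"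
      by (rule line_deriv_within[where S=UNIV]) (use du[OF m2] in \<open>auto intro: bounded_linear.linear[OF blinfun.bounded_linear_right]\<close>)
    show ?thesis unfolding g_def using DERIV_diff[OF a1 a2] by simp
  qed
  obtain s1 where s1: "0 < s1" "s1 < 1" "g 1 - g 0 = (1 - 0) * (Du (p + h + s1 *\<^sub>R k) k - Du (p + s1 *\<^sub>R k) k)"
    using MVT2[of 0 1 g "\<lambda>s. Du (p + h + s *\<^sub>R k) k - Du (p + s *\<^sub>R k) k"] dg by auto
  define m where "m \<sigma> = Du (p + s1 *\<^sub>R k + \<sigma> *\<^sub>R h) k" for \<sigma>
  have dm: "(m has_real_derivative D2 (p + s1 *\<^sub>R k + \<sigma> *\<^sub>R h) h k) (at \<sigma>)"
    if "0 \<le> \<sigma>" "\<sigma> \<le> 1" for \<sigma>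
  proof -
    have m1: "p + s1 *\<^sub>R k + \<sigma> *\<^sub>R h \<in> S" using inb[of s1 \<sigma>] that s1 by simp
    have "((\<lambda>q. Du q k) has_derivative (\<lambda>x. D2 (p + s1 *\<^sub>R k + \<sigma> *\<^sub>R h) x k)) (at (p + s1 *\<^sub>R k + \<sigma> *\<^sub>R h) within UNIV)"
      using blinfun_apply_deriv[OF d2[OF m1]] by simp
    then show ?thesis unfolding m_def
      by (rule line_deriv_within[where S=UNIV]) (auto intro: bounded_linear.linear bounded_linear_compose[OF blinfun.bounded_linear_left blinfun.bounded_linear_right])
  qed
  obtain \<sigma>1 where \<sigma>1: "0 < \<sigma>1" "\<sigma>1 < 1" "m 1 - m 0 = (1 - 0) * D2 (p + s1 *\<^sub>R k + \<sigma>1 *\<^sub>R h) h k"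
    using MVT2[of 0 1 m "\<lambda>\<sigma>. D2 (p + s1 *\<^sub>R k + \<sigma> *\<^sub>R h) h k"] dm by auto
  have eq: "u (p+h+k) - u (p+h) - u (p+k) + u p = D2 (p + s1 *\<^sub>R k + \<sigma>1 *\<^sub>R h) h k"
    using s1(3) \<sigma>1(3) unfolding g_def m_def by (simp add: algebra_simps)
  have "norm (s1 *\<^sub>R k + \<sigma>1 *\<^sub>R h) \<le> s1 * norm k + \<sigma>1 * norm h"
    using norm_triangle_ineq[of "s1 *\<^sub>R k" "\<sigma>1 *\<^sub>R h"] s1 \<sigma>1 by simp
  also have "\<dots> \<le> norm h + norm k"
    using s1 \<sigma>1 by (smt (verit) mult_left_le_one_le norm_ge_zero)
  finally show ?thesis using eq by (intro exI[of _ "p + s1 *\<^sub>R k + \<sigma>1 *\<^sub>R h"]) (simp add: add.assoc)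
qed

lemma blinfun2_bound:
  "\<bar>blinfun_apply (blinfun_apply (X :: 'a::real_normed_vector \<Rightarrow>\<^sub>L 'a \<Rightarrow>\<^sub>L real) h) k\<bar> \<le> norm X * norm h * norm k"
proof -
  have "norm (blinfun_apply (blinfun_apply X h) k) \<le> norm (blinfun_apply X h) * norm k"
    by (rule norm_blinfun)
  also have "\<dots> \<le> norm X * norm h * norm k"
    by (intro mult_right_mono norm_blinfun) auto
  finally show ?thesis by simp
qed

lemma second_deriv_sym:
  fixes u :: "'a::real_normed_vector \<Rightarrow> real"
  assumes S: "open S" "p \<in> S"
   and du: "\<And>q. q\<in>S \<Longrightarrow> (u has_derivative blinfun_apply (Du q)) (at q)"
   and d2: "\<And>q. q\<in>S \<Longrightarrow> (Du has_derivative blinfun_apply (D2 q)) (at q)"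
   and c: "continuous_on S D2"
  shows "D2 p h k = D2 p k h"
proof (cases "norm h + norm k = 0")
  case True
  then have "h = 0" "k = 0" by (auto simp: add_nonneg_eq_0_iff)
  then show ?thesis by simp
next
  case False
  then have hk: "norm h + norm k > 0" by (simp add: add_pos_nonneg order_le_neq_trans)
  obtain r where r: "r > 0" "ball p r \<subseteq> S" using S open_contains_ball by blast
  have key: "\<bar>D2 p h k - D2 p k h\<bar> \<le> e * (2 * norm h * norm k)" if e: "e > 0" for e
  proof -
    have "isCont D2 p" using c S continuous_on_eq_continuous_at by blast
    then obtain d where d: "d > 0" "\<And>q. dist q p < d \<Longrightarrow> dist (D2 q) (D2 p) < e"
      using e unfolding continuous_at_eps_delta by blast
    define s where "s = min r d / (2 * (norm h + norm k))"
    have s0: "s > 0" using r d hk by (simp add: s_def)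
    have "s * (norm h + norm k) = min r d / 2" using hk unfolding s_def by (simp add: field_simps)
    then have ss: "s * (norm h + norm k) < min r d" using r d by linarith
    have nr: "norm (s *\<^sub>R h) + norm (s *\<^sub>R k) < r" using ss s0 by (simp add: algebra_simps)
    obtain z1 where z1: "norm (z1 - p) \<le> norm (s *\<^sub>R h) + norm (s *\<^sub>R k)"
      "u (p + s *\<^sub>R h + s *\<^sub>R k) - u (p + s *\<^sub>R h) - u (p + s *\<^sub>R k) + u p = D2 z1 (s *\<^sub>R h) (s *\<^sub>R k)"
      using second_deriv_Delta[OF r(2) nr du d2] by blast
    have nr': "norm (s *\<^sub>R k) + norm (s *\<^sub>R h) < r" using nr by simp
    obtain z2 where z2: "norm (z2 - p) \<le> norm (s *\<^sub>R k) + norm (s *\<^sub>R h)"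
      "u (p + s *\<^sub>R k + s *\<^sub>R h) - u (p + s *\<^sub>R k) - u (p + s *\<^sub>R h) + u p = D2 z2 (s *\<^sub>R k) (s *\<^sub>R h)"
      using second_deriv_Delta[OF r(2) nr' du d2] by blast
    have "D2 z1 (s *\<^sub>R h) (s *\<^sub>R k) = D2 z2 (s *\<^sub>R k) (s *\<^sub>R h)"
      using z1(2) z2(2) by (simp add: algebra_simps)
    then have "s * s * D2 z1 h k = s * s * D2 z2 k h"
      by (simp add: blinfun.scaleR_right blinfun.scaleR_left)
    then have eqz: "D2 z1 h k = D2 z2 k h" using s0 by simp
    have dz1: "dist z1 p < d" using z1(1) ss s0 by (simp add: dist_norm algebra_simps)
    have dz2: "dist z2 p < d" using z2(1) ss s0 by (simp add: dist_norm algebra_simps)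
    have b1: "\<bar>D2 p h k - D2 z1 h k\<bar> \<le> e * norm h * norm k"
    proof -
      have "\<bar>D2 p h k - D2 z1 h k\<bar> = \<bar>blinfun_apply (blinfun_apply (D2 p - D2 z1) h) k\<bar>"
        by (simp add: blinfun.diff_left)
      also have "\<dots> \<le> norm (D2 p - D2 z1) * norm h * norm k" by (rule blinfun2_bound)
      also have "\<dots> \<le> e * norm h * norm k"
        using d(2)[OF dz1] by (intro mult_right_mono) (auto simp: dist_norm norm_minus_commute)
      finally show ?thesis .
    qed
    have b2: "\<bar>D2 z2 k h - D2 p k h\<bar> \<le> e * norm k * norm h"
    proof -
      have "\<bar>D2 z2 k h - D2 p k h\<bar> = \<bar>blinfun_apply (blinfun_apply (D2 z2 - D2 p) k) h\<bar>"
        by (simp add: blinfun.diff_left)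
      also have "\<dots> \<le> norm (D2 z2 - D2 p) * norm k * norm h" by (rule blinfun2_bound)
      also have "\<dots> \<le> e * norm k * norm h"
        using d(2)[OF dz2] by (intro mult_right_mono) (auto simp: dist_norm)
      finally show ?thesis .
    qed
    show ?thesis using b1 b2 eqz by (simp add: algebra_simps)
  qed
  show ?thesis
  proof (rule ccontr)
    assume ne: "D2 p h k \<noteq> D2 p k h"
    define C where "C = 2 * norm h * norm k"
    have C0: "C \<ge> 0" by (simp add: C_def)
    define e where "e = \<bar>D2 p h k - D2 p k h\<bar> / (C + 1)"
    have e0: "e > 0" using ne C0 by (simp add: e_def)
    have "\<bar>D2 p h k - D2 p k h\<bar> \<le> e * C" using key[OF e0] by (simp add: C_def)
    also have "\<dots> < \<bar>D2 p h k - D2 p k h\<bar>"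
      using ne C0 by (simp add: e_def field_simps)
    finally show False by simp
  qed
qed

lemma integral_UNIV_box:
  fixes G :: "'a::euclidean_space \<Rightarrow> real"
  assumes "\<And>x. x \<notin> S \<Longrightarrow> G x = 0"
  shows "(G has_integral I) S \<longleftrightarrow> (G has_integral I) UNIV"
proof -
  have "(\<lambda>x. if x \<in> S then G x else 0) = G" using assms by auto
  then show ?thesis using has_integral_restrict_UNIV[of S G I] by simp
qed

lemma integral_dir_deriv_zero:
  fixes G D :: "'a::euclidean_space \<Rightarrow> real"
  assumes contG: "continuous_on UNIV G"
   and supp: "\<And>x. x \<notin> cball 0 R \<Longrightarrow> G x = 0"
   and der: "\<And>x. ((\<lambda>r. G (x + r *\<^sub>R v)) has_real_derivative D x) (at 0)"
   and bnd: "\<And>x. \<bar>D x\<bar> \<le> B"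
   and box: "cball 0 (R + norm v) \<subseteq> cbox a b"
  shows "D integrable_on cbox a b" "integral (cbox a b) D = 0"
proof -
  define hn where "hn n = inverse (real (Suc n))" for n
  have hn0: "hn n > 0" "hn n \<le> 1" for n by (auto simp: hn_def field_simps)
  define f where "f n x = (G (x + hn n *\<^sub>R v) - G x) / hn n" for n x
  have cb: "cball 0 R \<subseteq> cbox a b" using box by (smt (verit) mem_cball_0 norm_ge_zero subset_iff)
  have Gint: "G integrable_on cbox a b"
    by (rule integrable_continuous) (use contG continuous_on_subset in blast)
  obtain I where I: "(G has_integral I) (cbox a b)" using Gint by blast
  have IU: "(G has_integral I) UNIV"
    using I integral_UNIV_box[of "cbox a b" G I] supp cb by blast
  have shift: "((\<lambda>x. G (x + c)) has_integral I) (cbox a b)" if c: "norm c \<le> norm v" for c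
  proof -
    have "cball 0 R \<subseteq> cbox (a + c) (b + c)"
    proof
      fix x :: 'a assume x: "x \<in> cball 0 R"
      have "norm (x - c) \<le> R + norm v" using x c norm_triangle_ineq4[of x c] by auto
      then have "x - c \<in> cbox a b" using box by auto
      then show "x \<in> cbox (a + c) (b + c)" by (auto simp: mem_box inner_diff_left inner_add_left)
    qed
    then have "(G has_integral I) (cbox (a + c) (b + c))"
      using IU integral_UNIV_box[of "cbox (a + c) (b + c)" G I] supp by blast
    then have "((G \<circ> (+) c) has_integral I) (cbox a b)" using has_integral_shift_cbox_iff by blast
    then show ?thesis by (simp add: o_def add.commute)
  qed
  have fint: "(f n has_integral 0) (cbox a b)" for n
  proof -
    have "norm (hn n *\<^sub>R v) \<le> norm v" using hn0[of n] by (simp add: mult_left_le_one_le)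
    from has_integral_diff[OF shift[OF this] I]
    have "((\<lambda>x. G (x + hn n *\<^sub>R v) - G x) has_integral 0) (cbox a b)" by simp
    from has_integral_mult_left[OF this, of "inverse (hn n)"]
    show ?thesis unfolding f_def by (simp add: divide_inverse mult.commute)
  qed
  have derr: "((\<lambda>s. G (x + s *\<^sub>R v)) has_real_derivative D (x + r *\<^sub>R v)) (at r)" for x r
  proof -
    have "((\<lambda>s. G ((x + r *\<^sub>R v) + s *\<^sub>R v)) has_real_derivative D (x + r *\<^sub>R v)) (at 0)" by (rule der)
    then have "((\<lambda>s. G (x + (s + r) *\<^sub>R v)) has_real_derivative D (x + r *\<^sub>R v)) (at 0)"
      by (simp add: algebra_simps scaleR_add_left)
    then show ?thesis using DERIV_shift[of "\<lambda>s. G (x + s *\<^sub>R v)" "D (x + r *\<^sub>R v)" 0 r] by simp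
  qed
  have fb: "norm (f n x) \<le> B" for n x
  proof -
    obtain z where z: "0 < z" "z < hn n"
      "G (x + hn n *\<^sub>R v) - G (x + 0 *\<^sub>R v) = (hn n - 0) * D (x + z *\<^sub>R v)"
      using MVT2[of 0 "hn n" "\<lambda>s. G (x + s *\<^sub>R v)" "\<lambda>r. D (x + r *\<^sub>R v)"] hn0[of n] derr by blast
    then have "f n x = D (x + z *\<^sub>R v)" using hn0[of n] by (simp add: f_def)
    then show ?thesis using bnd by simp
  qed
  have fl: "(\<lambda>n. f n x) \<longlonglongrightarrow> D x" for x
  proof -
    have "((\<lambda>y. (G (x + y *\<^sub>R v) - G (x + 0 *\<^sub>R v)) / (y - 0)) \<longlongrightarrow> D x) (at 0)"
      using der[of x] unfolding has_field_derivative_iff by simp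
    then have L: "((\<lambda>y. (G (x + y *\<^sub>R v) - G x) / y) \<longlongrightarrow> D x) (at 0)" by simp
    have "hn \<longlonglongrightarrow> 0" unfolding hn_def by (rule LIMSEQ_inverse_real_of_nat)
    then have "filterlim hn (at 0) sequentially"
      using hn0 by (intro filterlim_atI) (auto intro!: always_eventually simp: less_imp_neq[symmetric])
    from filterlim_compose[OF L this] show ?thesis by (simp add: f_def o_def)
  qed
  have hint: "(\<lambda>x. B) integrable_on cbox a b" by (rule integrable_continuous) (rule continuous_on_const)
  have fi: "f n integrable_on cbox a b" for n using fint by blast
  note dc = dominated_convergence[of f "cbox a b" "\<lambda>x. B" D, OF fi hint fb fl]
  show "D integrable_on cbox a b" by (rule dc(1))
  have "(\<lambda>n. integral (cbox a b) (f n)) = (\<lambda>n. 0)" using fint by (auto intro: integral_unique)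
  then have "(\<lambda>n. 0) \<longlonglongrightarrow> integral (cbox a b) D" using dc(2) by simp
  then show "integral (cbox a b) D = 0" using LIMSEQ_const_iff by metis
qed

locale dsetup =
  fixes R Rp :: "'a::euclidean_space set"
    and k :: "'a \<Rightarrow> real"
    and x0 :: 'a and t0 :: real
    and u :: "'a \<times> real \<Rightarrow> real"
    and Du :: "'a \<times> real \<Rightarrow> ('a \<times> real) \<Rightarrow>\<^sub>L real"
    and D2u :: "'a \<times> real \<Rightarrow> ('a \<times> real) \<Rightarrow>\<^sub>L (('a \<times> real) \<Rightarrow>\<^sub>L real)"
  assumes rs: "normalized_reduced_root_system R"
    and ps: "positive_subsystem R Rp"
    and mf: "multiplicity_function R k"
    and t0: "t0 > 0"
    and du: "\<forall>p\<in>light_cone x0 t0. (u has_derivative blinfun_apply (Du p)) (at p within light_cone x0 t0)"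
    and d2: "\<forall>p\<in>light_cone x0 t0. (Du has_derivative blinfun_apply (D2u p)) (at p within light_cone x0 t0)"
    and cD2: "continuous_on (light_cone x0 t0) D2u"
    and eq: "\<forall>p\<in>light_cone x0 t0. (\<forall>\<alpha>\<in>R. \<alpha> \<bullet> fst p \<noteq> 0) \<longrightarrow> dunkl_wave_op Rp k Du D2u p = 0"
    and init: "\<forall>x. norm (x - x0) \<le> t0 \<longrightarrow> u (x, 0) = 0 \<and> Du (x, 0) (0, 1) = 0"
begin

abbreviation "LC \<equiv> light_cone x0 t0"

definition IC where "IC = {p. 0 < snd p \<and> norm (fst p - x0) < t0 - snd p}"

lemma mem_LC: "(x, t) \<in> LC \<longleftrightarrow> 0 \<le> t \<and> norm (x - x0) \<le> t0 - t"
  by (simp add: light_cone_def)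

lemma mem_IC: "(x, t) \<in> IC \<longleftrightarrow> 0 < t \<and> norm (x - x0) < t0 - t"
  by (simp add: IC_def)

lemma open_IC: "open IC"
proof -
  have "IC = {p. 0 < snd p} \<inter> {p. norm (fst p - x0) + snd p < t0}" by (auto simp: IC_def)
  moreover have "open {p::'a\<times>real. 0 < snd p}" by (intro open_Collect_less continuous_intros)
  moreover have "open {p::'a\<times>real. norm (fst p - x0) + snd p < t0}" by (intro open_Collect_less continuous_intros)
  ultimately show ?thesis by auto
qed

lemma IC_sub: "IC \<subseteq> LC" by (auto simp: IC_def light_cone_def)

lemma du_at: "p \<in> IC \<Longrightarrow> (u has_derivative blinfun_apply (Du p)) (at p)"
proof -
  assume p: "p \<in> IC"
  then have "(u has_derivative blinfun_apply (Du p)) (at p within LC)" using du IC_sub by auto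
  moreover have "at p within LC = at p" using at_within_open_subset[OF p open_IC IC_sub] .
  ultimately show ?thesis by simp
qed

lemma d2_at: "p \<in> IC \<Longrightarrow> (Du has_derivative blinfun_apply (D2u p)) (at p)"
proof -
  assume p: "p \<in> IC"
  then have "(Du has_derivative blinfun_apply (D2u p)) (at p within LC)" using d2 IC_sub by auto
  moreover have "at p within LC = at p" using at_within_open_subset[OF p open_IC IC_sub] .
  ultimately show ?thesis by simp
qed

lemma cDu: "continuous_on LC Du"
  using d2 has_derivative_continuous continuous_on_eq_continuous_within by blast

lemma cu: "continuous_on LC u"
  using du has_derivative_continuous continuous_on_eq_continuous_within by blast

lemma isCont_Du: "p \<in> IC \<Longrightarrow> isCont Du p"
  using cDu IC_sub open_IC continuous_on_eq_continuous_at continuous_on_subset by blast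

lemma isCont_D2u: "p \<in> IC \<Longrightarrow> isCont D2u p"
  using cD2 IC_sub open_IC continuous_on_eq_continuous_at continuous_on_subset by blast

lemma sym: "p \<in> IC \<Longrightarrow> D2u p h k' = D2u p k' h"
  by (rule second_deriv_sym[OF open_IC _ du_at d2_at continuous_on_subset[OF cD2 IC_sub]])

lemma Rp_sub: "Rp \<subseteq> R" using ps by (auto simp: positive_subsystem_def)
lemma finR: "finite R" using rs by (simp add: normalized_reduced_root_system_def)
lemma finRp: "finite Rp" using finite_subset[OF Rp_sub finR] .
lemma norm2: "\<alpha> \<in> R \<Longrightarrow> \<alpha> \<bullet> \<alpha> = 2" using rs by (simp add: normalized_reduced_root_system_def)
lemma normR: "\<alpha> \<in> R \<Longrightarrow> norm \<alpha> = sqrt 2" using norm2 by (simp add: norm_eq_sqrt_inner)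
lemma k_nonneg: "\<alpha> \<in> R \<Longrightarrow> k \<alpha> \<ge> 0" using mf by (simp add: multiplicity_function_def)
lemma neg_in_R: "\<alpha> \<in> R \<Longrightarrow> - \<alpha> \<in> R"
proof -
  assume a: "\<alpha> \<in> R"
  have "refl_root \<alpha> \<alpha> \<in> R" using rs a by (simp add: normalized_reduced_root_system_def)
  moreover have "refl_root \<alpha> \<alpha> = - \<alpha>" using norm2[OF a] by (simp add: refl_root_def scaleR_2)
  ultimately show ?thesis by simp
qed

lemma R_pm: "\<alpha> \<in> R \<Longrightarrow> \<alpha> \<in> Rp \<or> - \<alpha> \<in> Rp"
proof -
  assume a: "\<alpha> \<in> R"
  obtain \<beta> where b: "\<forall>\<alpha>\<in>R. \<alpha> \<bullet> \<beta> \<noteq> 0" "Rp = {\<alpha>\<in>R. \<alpha> \<bullet> \<beta> > 0}"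
    using ps by (auto simp: positive_subsystem_def)
  show ?thesis using b a neg_in_R[OF a] by force
qed

lemma good_iff: "(\<forall>\<alpha>\<in>R. \<alpha> \<bullet> x \<noteq> 0) \<longleftrightarrow> (\<forall>\<alpha>\<in>Rp. \<alpha> \<bullet> x \<noteq> 0)"
  using Rp_sub R_pm by (metis inner_minus_left neg_equal_0_iff_equal subsetD)

lemma neg_notin_Rp: "\<alpha> \<in> Rp \<Longrightarrow> - \<alpha> \<notin> Rp"
  using ps by (auto simp: positive_subsystem_def)

lemma not_parallel: "\<alpha> \<in> Rp \<Longrightarrow> \<beta> \<in> Rp \<Longrightarrow> \<beta> \<noteq> \<alpha> \<Longrightarrow> \<bar>\<alpha> \<bullet> \<beta>\<bar> < 2"
proof -
  assume a: "\<alpha> \<in> Rp" and b: "\<beta> \<in> Rp" and ne: "\<beta> \<noteq> \<alpha>"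
  have na: "norm \<alpha> = sqrt 2" and nb: "norm \<beta> = sqrt 2" using a b Rp_sub normR by auto
  have le: "\<bar>\<alpha> \<bullet> \<beta>\<bar> \<le> norm \<alpha> * norm \<beta>" by (rule Cauchy_Schwarz_ineq2)
  have "\<bar>\<alpha> \<bullet> \<beta>\<bar> \<noteq> norm \<alpha> * norm \<beta>"
  proof
    assume "\<bar>\<alpha> \<bullet> \<beta>\<bar> = norm \<alpha> * norm \<beta>"
    then have "norm \<alpha> *\<^sub>R \<beta> = norm \<beta> *\<^sub>R \<alpha> \<or> norm \<alpha> *\<^sub>R \<beta> = - norm \<beta> *\<^sub>R \<alpha>"
      using norm_cauchy_schwarz_abs_eq by blast
    then have "sqrt 2 *\<^sub>R \<beta> = sqrt 2 *\<^sub>R \<alpha> \<or> sqrt 2 *\<^sub>R \<beta> = sqrt 2 *\<^sub>R (- \<alpha>)" using na nb by auto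
    then have "\<beta> = \<alpha> \<or> \<beta> = - \<alpha>" by (metis scaleR_cancel_left real_sqrt_eq_zero_cancel_iff zero_neq_numeral)
    then show False using ne neg_notin_Rp[OF a] b by auto
  qed
  moreover have "norm \<alpha> * norm \<beta> = 2" using na nb by simp
  ultimately show ?thesis using le by linarith
qed

definition good where "good x \<longleftrightarrow> (\<forall>\<alpha>\<in>Rp. \<alpha> \<bullet> x \<noteq> 0)"

lemma negl_bad: "negligible {x. \<not> good x}"
proof -
  have "{x. \<not> good x} = (\<Union>\<alpha>\<in>Rp. {x. \<alpha> \<bullet> x = 0})" by (auto simp: good_def)
  moreover have "\<alpha> \<in> Rp \<Longrightarrow> negligible {x. \<alpha> \<bullet> x = 0}" for \<alpha>
    using Rp_sub rs by (intro negligible_hyperplane) (auto simp: normalized_reduced_root_system_def)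
  ultimately show ?thesis using finRp by (auto intro!: negligible_Union)
qed

lemma eqn: "(x, t) \<in> LC \<Longrightarrow> good x \<Longrightarrow>
  (\<Sum>b\<in>Basis. D2u (x, t) (b, 0) (b, 0)) + 2 * (\<Sum>\<alpha>\<in>Rp. k \<alpha> * Du (x, t) (\<alpha>, 0) / (\<alpha> \<bullet> x))
     - D2u (x, t) (0, 1) (0, 1) = 0"
  using eq good_iff unfolding good_def dunkl_wave_op_def by fastforce

end

lemma lim_zero:
  assumes "isCont \<Phi> q" "P \<longlonglongrightarrow> q" "eventually (\<lambda>n. \<Phi> (P n) = 0) sequentially"
  shows "\<Phi> q = (0::real)"
proof -
  have "(\<lambda>n. \<Phi> (P n)) \<longlonglongrightarrow> \<Phi> q" using isCont_tendsto_compose[OF assms(1,2)] .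
  moreover have "(\<lambda>n. \<Phi> (P n)) \<longlonglongrightarrow> 0"
    by (rule Lim_transform_eventually[OF tendsto_const]) (use assms(3) in \<open>auto elim: eventually_mono\<close>)
  ultimately show ?thesis using LIMSEQ_unique by blast
qed

lemma inv_Suc_lim: "(\<lambda>n. c / real (Suc n)) \<longlonglongrightarrow> (0::real)"
proof -
  have "(\<lambda>n. c * inverse (real (Suc n))) \<longlonglongrightarrow> c * 0"
    by (intro tendsto_mult tendsto_const LIMSEQ_inverse_real_of_nat)
  then show ?thesis by (simp add: divide_inverse)
qed

lemma ev_nonzero:
  assumes "a \<noteq> 0 \<or> c \<noteq> 0"
  shows "eventually (\<lambda>n. a + c / real (Suc n) \<noteq> (0::real)) sequentially"
proof (cases "a = 0")
  case True
  then show ?thesis using assms by (auto intro: always_eventually)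
next
  case False
  have "eventually (\<lambda>n. dist (c / real (Suc n)) 0 < \<bar>a\<bar>) sequentially"
    using inv_Suc_lim[of c] False by (auto simp: tendsto_iff)
  then show ?thesis
  proof (rule eventually_mono)
    fix n assume h: "dist (c / real (Suc n)) 0 < \<bar>a\<bar>"
    show "a + c / real (Suc n) \<noteq> 0"
    proof
      assume "a + c / real (Suc n) = 0"
      then have "c / real (Suc n) = - a" by linarith
      then show False using h by (simp add: dist_real_def)
    qed
  qed
qed

lemma seq_lim_vec: fixes z v :: "'a::real_normed_vector" and t :: real shows "(\<lambda>n. (z + (1 / real (Suc n)) *\<^sub>R v, t)) \<longlonglongrightarrow> (z, t)"
proof -
  have "(\<lambda>n. z + (1 / real (Suc n)) *\<^sub>R v) \<longlonglongrightarrow> z + 0 *\<^sub>R v"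
    by (rule tendsto_add[OF tendsto_const], rule tendsto_scaleR[OF inv_Suc_lim[of 1] tendsto_const])
  then show ?thesis by (auto intro: tendsto_Pair)
qed

context dsetup begin

lemma ev_in_open:
  fixes z v :: 'a and t :: real
  assumes "open S" "(z, t) \<in> S"
  shows "eventually (\<lambda>n. (z + (1 / real (Suc n)) *\<^sub>R v, t) \<in> S) sequentially"
  using topological_tendstoD[OF seq_lim_vec assms] .

lemma vanish_generic:
  assumes zt: "(z, t) \<in> IC" and a: "\<alpha> \<in> Rp" and az: "\<alpha> \<bullet> z = 0" and ka: "k \<alpha> \<noteq> 0"
    and gen: "\<forall>\<beta>\<in>Rp - {\<alpha>}. \<beta> \<bullet> z \<noteq> 0"
  shows "Du (z, t) (\<alpha>, 0) = 0"
proof -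
  define H where "H p = (D2u p (0, 1) (0, 1) - (\<Sum>b\<in>Basis. D2u p (b, 0) (b, 0))) / 2
     - (\<Sum>\<beta>\<in>Rp - {\<alpha>}. k \<beta> * Du p (\<beta>, 0) / (\<beta> \<bullet> fst p))" for p
  define \<Phi> where "\<Phi> p = k \<alpha> * Du p (\<alpha>, 0) - (\<alpha> \<bullet> fst p) * H p" for p
  have cD: "isCont Du (z, t)" using isCont_Du[OF zt] .
  have cD2: "isCont D2u (z, t)" using isCont_D2u[OF zt] .
  have "isCont \<Phi> (z, t)"
    unfolding \<Phi>_def H_def
    by (intro continuous_intros blinfun.continuous cD cD2) (use gen in auto)
  moreover have "eventually (\<lambda>n. \<Phi> (z + (1 / real (Suc n)) *\<^sub>R \<alpha>, t) = 0) sequentially"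
  proof -
    have e1: "eventually (\<lambda>n. (z + (1 / real (Suc n)) *\<^sub>R \<alpha>, t) \<in> IC) sequentially"
      by (rule ev_in_open[OF open_IC zt])
    have e2: "eventually (\<lambda>n. \<forall>\<beta>\<in>Rp. \<beta> \<bullet> (z + (1 / real (Suc n)) *\<^sub>R \<alpha>) \<noteq> 0) sequentially"
    proof (rule eventually_ball_finite[OF finRp], rule ballI)
      fix \<beta> assume b: "\<beta> \<in> Rp"
      have "\<beta> \<bullet> z \<noteq> 0 \<or> \<beta> \<bullet> \<alpha> \<noteq> 0"
        using gen b norm2[of \<alpha>] a Rp_sub by (cases "\<beta> = \<alpha>") auto
      then show "eventually (\<lambda>n. \<beta> \<bullet> (z + (1 / real (Suc n)) *\<^sub>R \<alpha>) \<noteq> 0) sequentially"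
        using ev_nonzero[of "\<beta> \<bullet> z" "\<beta> \<bullet> \<alpha>"] by (simp add: inner_add_right)
    qed
    show ?thesis using e1 e2
    proof eventually_elim
      case (elim n)
      define x where "x = z + (1 / real (Suc n)) *\<^sub>R \<alpha>"
      have xi: "(x, t) \<in> IC" and gx: "good x" using elim by (auto simp: x_def good_def)
      have E: "(\<Sum>b\<in>Basis. D2u (x, t) (b, 0) (b, 0)) + 2 * (\<Sum>\<alpha>\<in>Rp. k \<alpha> * Du (x, t) (\<alpha>, 0) / (\<alpha> \<bullet> x))
         - D2u (x, t) (0, 1) (0, 1) = 0"
        using eqn[OF subsetD[OF IC_sub xi] gx] .
      have ax: "\<alpha> \<bullet> x \<noteq> 0" using gx a by (auto simp: good_def)
      have "(\<Sum>\<alpha>\<in>Rp. k \<alpha> * Du (x, t) (\<alpha>, 0) / (\<alpha> \<bullet> x)) = k \<alpha> * Du (x, t) (\<alpha>, 0) / (\<alpha> \<bullet> x)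
          + (\<Sum>\<beta>\<in>Rp - {\<alpha>}. k \<beta> * Du (x, t) (\<beta>, 0) / (\<beta> \<bullet> x))"
        by (rule sum.remove[OF finRp a])
      note E' = E[unfolded this]
      have "k \<alpha> * Du (x, t) (\<alpha>, 0) / (\<alpha> \<bullet> x) = H (x, t)"
      proof -
        have gen: "\<And>L q S2 U. L + 2 * (q + S2) - U = (0::real) \<Longrightarrow> q = (U - L) / 2 - S2" by (simp add: field_simps)
        show ?thesis unfolding H_def fst_conv by (rule gen[OF E'])
      qed
      then have "k \<alpha> * Du (x, t) (\<alpha>, 0) = (\<alpha> \<bullet> x) * H (x, t)"
        using ax by (simp add: field_simps)
      then show ?case unfolding \<Phi>_def x_def[symmetric] by simp
    qed
  qed
  ultimately have "\<Phi> (z, t) = 0" using lim_zero seq_lim_vec by blast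
  then show ?thesis using az ka by (simp add: \<Phi>_def)
qed

lemma vanish:
  assumes zt: "(z, t) \<in> IC" and a: "\<alpha> \<in> Rp" and az: "\<alpha> \<bullet> z = 0" and ka: "k \<alpha> \<noteq> 0"
  shows "Du (z, t) (\<alpha>, 0) = 0"
proof -
  have "\<exists>v\<in>{v. \<alpha> \<bullet> v = 0}. \<forall>\<beta>\<in>Rp - {\<alpha>}. \<beta> \<bullet> v \<noteq> 0"
  proof (rule avoid_hyperplanes)
    show "finite (Rp - {\<alpha>})" using finRp by simp
    show "subspace {v. \<alpha> \<bullet> v = 0}" by (rule subspace_hyperplane)
    fix \<beta> assume b: "\<beta> \<in> Rp - {\<alpha>}"
    define w where "w = \<beta> - ((\<alpha> \<bullet> \<beta>) / 2) *\<^sub>R \<alpha>"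
    have aa: "\<alpha> \<bullet> \<alpha> = 2" "\<beta> \<bullet> \<beta> = 2" using a b Rp_sub norm2 by auto
    have "\<alpha> \<bullet> w = 0" using aa by (simp add: w_def inner_diff_right)
    moreover have "\<beta> \<bullet> w \<noteq> 0"
    proof -
      have lt: "\<bar>\<alpha> \<bullet> \<beta>\<bar> < 2" using not_parallel[OF a] b by auto
      have "\<beta> \<bullet> w = 2 - (\<alpha> \<bullet> \<beta>) * (\<alpha> \<bullet> \<beta>) / 2"
        using aa by (simp add: w_def inner_diff_right inner_commute)
      moreover have "(\<alpha> \<bullet> \<beta>) * (\<alpha> \<bullet> \<beta>) < 4"
      proof -
        have "\<bar>\<alpha> \<bullet> \<beta>\<bar> * \<bar>\<alpha> \<bullet> \<beta>\<bar> < 2 * 2"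
          using lt by (intro mult_strict_mono) auto
        then show ?thesis by (simp add: abs_mult[symmetric])
      qed
      ultimately show ?thesis by simp
    qed
    ultimately show "\<exists>v\<in>{v. \<alpha> \<bullet> v = 0}. \<beta> \<bullet> v \<noteq> 0" by blast
  qed
  then obtain v where v: "\<alpha> \<bullet> v = 0" "\<forall>\<beta>\<in>Rp - {\<alpha>}. \<beta> \<bullet> v \<noteq> 0" by blast
  have "isCont (\<lambda>p. Du p (\<alpha>, 0)) (z, t)"
    by (intro continuous_intros blinfun.continuous isCont_Du[OF zt])
  moreover have "eventually (\<lambda>n. Du (z + (1 / real (Suc n)) *\<^sub>R v, t) (\<alpha>, 0) = 0) sequentially"
  proof -
    have e1: "eventually (\<lambda>n. (z + (1 / real (Suc n)) *\<^sub>R v, t) \<in> IC) sequentially"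
      by (rule ev_in_open[OF open_IC zt])
    have e2: "eventually (\<lambda>n. \<forall>\<beta>\<in>Rp - {\<alpha>}. \<beta> \<bullet> (z + (1 / real (Suc n)) *\<^sub>R v) \<noteq> 0) sequentially"
    proof (rule eventually_ball_finite, use finRp in simp, rule ballI)
      fix \<beta> assume b: "\<beta> \<in> Rp - {\<alpha>}"
      show "eventually (\<lambda>n. \<beta> \<bullet> (z + (1 / real (Suc n)) *\<^sub>R v) \<noteq> 0) sequentially"
        using ev_nonzero[of "\<beta> \<bullet> z" "\<beta> \<bullet> v"] v b by (simp add: inner_add_right)
    qed
    show ?thesis using e1 e2
    proof eventually_elim
      case (elim n)
      show ?case
        by (rule vanish_generic[OF elim(1) a _ ka elim(2)]) (use az v in \<open>simp add: inner_add_right\<close>)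
    qed
  qed
  ultimately show ?thesis using lim_zero[OF _ seq_lim_vec] by blast
qed

end

lemma bound_cont:
  fixes f :: "'b::topological_space \<Rightarrow> 'c::real_normed_vector"
  assumes "compact K" "continuous_on K f"
  shows "\<exists>B\<ge>0. \<forall>p\<in>K. norm (f p) \<le> B"
proof -
  have "bounded (f ` K)" using compact_imp_bounded[OF compact_continuous_image[OF assms(2,1)]] .
  then obtain B where "\<forall>y\<in>f ` K. norm y \<le> B" by (auto simp: bounded_iff)
  then show ?thesis by (intro exI[of _ "max B 0"]) auto
qed

context dsetup begin

definition sfun :: "'a \<Rightarrow> real \<Rightarrow> real" where "sfun x t = (t0 - t)\<^sup>2 - (norm (x - x0))\<^sup>2"

definition Kset where "Kset d T = {p. 0 \<le> snd p \<and> snd p \<le> T \<and> d \<le> sfun (fst p) (snd p)}"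

lemma sfun_pos_norm:
  assumes "0 < sfun x t" "t < t0"
  shows "norm (x - x0) < t0 - t"
proof -
  have h: "(norm (x - x0))\<^sup>2 < (t0 - t)\<^sup>2" using assms by (simp add: sfun_def)
  have "0 \<le> t0 - t" using assms(2) by simp
  from power_less_imp_less_base[OF h this] show ?thesis .
qed

lemma Kset_LC: "0 < d \<Longrightarrow> T < t0 \<Longrightarrow> p \<in> Kset d T \<Longrightarrow> p \<in> LC"
  using sfun_pos_norm[of "fst p" "snd p"] by (cases p) (auto simp: Kset_def light_cone_def)

lemma Kset_IC: "0 < d \<Longrightarrow> T < t0 \<Longrightarrow> (x, t) \<in> Kset d T \<Longrightarrow> 0 < t \<Longrightarrow> (x, t) \<in> IC"
  using sfun_pos_norm[of x t] by (auto simp: Kset_def IC_def)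

lemma compact_Kset:
  assumes "0 < d" "T < t0"
  shows "compact (Kset d T)"
unfolding compact_eq_bounded_closed
proof (intro conjI)
  have "Kset d T \<subseteq> cball x0 t0 \<times> {0..T}"
  proof
    fix p assume p: "p \<in> Kset d T"
    obtain x t where pe: "p = (x, t)" by force
    have "norm (x - x0) < t0 - t" using sfun_pos_norm[of x t] p assms by (auto simp: Kset_def pe)
    then show "p \<in> cball x0 t0 \<times> {0..T}" using p by (auto simp: pe Kset_def dist_norm norm_minus_commute)
  qed
  moreover have "bounded (cball x0 t0 \<times> {0..T})" by (intro bounded_Times) auto
  ultimately show "bounded (Kset d T)" using bounded_subset by blast
  have "Kset d T = {p. 0 \<le> snd p} \<inter> {p. snd p \<le> T} \<inter> {p. d \<le> (t0 - snd p)\<^sup>2 - (norm (fst p - x0))\<^sup>2}"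
    by (auto simp: Kset_def sfun_def)
  moreover have "closed {p::'a\<times>real. 0 \<le> snd p}" by (intro closed_Collect_le continuous_intros)
  moreover have "closed {p::'a\<times>real. snd p \<le> T}" by (intro closed_Collect_le continuous_intros)
  moreover have "closed {p::'a\<times>real. d \<le> (t0 - snd p)\<^sup>2 - (norm (fst p - x0))\<^sup>2}"
    by (intro closed_Collect_le continuous_intros)
  ultimately show "closed (Kset d T)" by auto
qed

lemma near_s:
  assumes "0 \<le> t" "t < t0" "\<delta> \<le> sfun x t" "0 < \<delta>" "norm (y - x) \<le> min 1 (\<delta> / (2 * (2 * t0 + 1)))"
  shows "\<delta> / 2 \<le> sfun y t"
proof -
  define \<eta> where "\<eta> = min 1 (\<delta> / (2 * (2 * t0 + 1)))"
  have e0: "0 \<le> \<eta>" "\<eta> \<le> 1" using assms t0 by (auto simp: \<eta>_def)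
  have "\<eta> \<le> \<delta> / (2 * (2 * t0 + 1))" by (simp add: \<eta>_def)
  then have "\<eta> * (2 * t0 + 1) \<le> \<delta> / (2 * (2 * t0 + 1)) * (2 * t0 + 1)"
    using t0 by (intro mult_right_mono) auto
  also have "\<dots> = \<delta> / 2" using t0 by (simp add: field_simps)
  finally have e1: "\<eta> * (2 * t0 + 1) \<le> \<delta> / 2" .
  have nx: "norm (x - x0) \<le> t0" using sfun_pos_norm[of x t] assms by auto
  have yx: "norm (y - x) \<le> \<eta>" unfolding \<eta>_def by (rule assms(5))
  have "norm (y - x0) \<le> norm (y - x) + norm (x - x0)"
    using norm_triangle_ineq[of "y - x" "x - x0"] by simp
  then have "norm (y - x0) \<le> norm (x - x0) + \<eta>" using yx by linarith
  then have "(norm (y - x0))\<^sup>2 \<le> (norm (x - x0) + \<eta>)\<^sup>2" by (rule power_mono) simp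
  also have "\<dots> = (norm (x - x0))\<^sup>2 + \<eta> * (2 * norm (x - x0) + \<eta>)" by (simp add: power2_eq_square algebra_simps)
  also have "\<dots> \<le> (norm (x - x0))\<^sup>2 + \<eta> * (2 * t0 + 1)"
  proof -
    have "2 * norm (x - x0) + \<eta> \<le> 2 * t0 + 1" using e0 nx by linarith
    then have "\<eta> * (2 * norm (x - x0) + \<eta>) \<le> \<eta> * (2 * t0 + 1)" using e0(1) by (rule mult_left_mono)
    then show ?thesis by linarith
  qed
  finally have "(norm (y - x0))\<^sup>2 \<le> (norm (x - x0))\<^sup>2 + \<eta> * (2 * t0 + 1)" .
  then show ?thesis using assms(3) e1 unfolding sfun_def by linarith
qed

lemma q_bound:
  assumes d0: "0 < \<delta>" and T: "T < t0"
  shows "\<exists>Cq\<ge>0. \<forall>\<alpha>\<in>Rp. \<forall>x t. 0 < t \<longrightarrow> t \<le> T \<longrightarrow> \<delta> \<le> sfun x t \<longrightarrow> \<alpha> \<bullet> x \<noteq> 0 \<longrightarrow>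
      \<bar>k \<alpha> * Du (x, t) (\<alpha>, 0) / (\<alpha> \<bullet> x)\<bar> \<le> Cq"
proof -
  define K2 where "K2 = Kset (\<delta>/2) T"
  have d2': "0 < \<delta> / 2" using d0 by simp
  have cK2: "compact K2" unfolding K2_def by (rule compact_Kset[OF d2' T])
  have sK2: "K2 \<subseteq> LC" unfolding K2_def using Kset_LC[OF d2' T] by blast
  obtain B1 where B1: "B1 \<ge> 0" "\<forall>p\<in>K2. norm (Du p) \<le> B1"
    using bound_cont[OF cK2 continuous_on_subset[OF cDu sK2]] by blast
  obtain B2 where B2: "B2 \<ge> 0" "\<forall>p\<in>K2. norm (D2u p) \<le> B2"
    using bound_cont[OF cK2 continuous_on_subset[OF cD2 sK2]] by blast
  define \<eta> where "\<eta> = min 1 (\<delta> / (2 * (2 * t0 + 1)))"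
  have "0 < \<delta> / (2 * (2 * t0 + 1))" using d0 t0 by simp
  then have e0: "0 < \<eta>" unfolding \<eta>_def by simp
  define Q0 where "Q0 = B1 * 2 / \<eta> + B2"
  have Q0: "Q0 \<ge> 0" using B1 B2 e0 by (simp add: Q0_def)
  define Kmax where "Kmax = (\<Sum>\<alpha>\<in>Rp. k \<alpha>)"
  have kle: "\<alpha> \<in> Rp \<Longrightarrow> k \<alpha> \<le> Kmax" for \<alpha>
    unfolding Kmax_def by (rule member_le_sum) (use finRp Rp_sub k_nonneg in blast)+
  have Km: "Kmax \<ge> 0" unfolding Kmax_def by (rule sum_nonneg) (use Rp_sub k_nonneg in blast)
  have s2: "sqrt 2 \<le> (2::real)"
  proof -
    have "sqrt (2::real) \<le> sqrt (2\<^sup>2)" by (intro real_sqrt_le_mono) auto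
    then show ?thesis by simp
  qed
  have ratio: "\<bar>Du (x, t) (\<alpha>, 0) / (\<alpha> \<bullet> x)\<bar> \<le> Q0"
    if a: "\<alpha> \<in> Rp" and t: "0 < t" "t \<le> T" and s: "\<delta> \<le> sfun x t" and ax: "\<alpha> \<bullet> x \<noteq> 0"
      and kn: "k \<alpha> \<noteq> 0" for \<alpha> x t
  proof -
    have na: "norm \<alpha> = sqrt 2" using a Rp_sub normR by auto
    have xK2: "(x, t) \<in> K2" using t s d0 by (auto simp: K2_def Kset_def)
    show ?thesis
    proof (cases "\<bar>\<alpha> \<bullet> x\<bar> \<ge> \<eta>")
      case True
      have "\<bar>Du (x, t) (\<alpha>, 0)\<bar> \<le> norm (Du (x, t)) * norm (\<alpha>, 0::real)"
        using norm_blinfun[of "Du (x, t)" "(\<alpha>, 0)"] by simp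
      also have "\<dots> = norm (Du (x, t)) * sqrt 2" using na by (simp add: norm_Pair)
      also have "\<dots> \<le> B1 * 2"
        using B1 xK2 s2 by (intro mult_mono) auto
      finally have "\<bar>Du (x, t) (\<alpha>, 0)\<bar> \<le> B1 * 2" .
      then have "\<bar>Du (x, t) (\<alpha>, 0)\<bar> / \<bar>\<alpha> \<bullet> x\<bar> \<le> B1 * 2 / \<eta>"
        using True e0 B1(1) by (intro frac_le) auto
      then show ?thesis using B2(1) by (simp add: Q0_def abs_divide)
    next
      case False
      then have small: "\<bar>\<alpha> \<bullet> x\<bar> < \<eta>" by auto
      define z where "z = x - ((\<alpha> \<bullet> x) / 2) *\<^sub>R \<alpha>"
      have aa: "\<alpha> \<bullet> \<alpha> = 2" using a Rp_sub norm2 by auto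
      have az: "\<alpha> \<bullet> z = 0" using aa by (simp add: z_def inner_diff_right)
      have "x - z = ((\<alpha> \<bullet> x) / 2) *\<^sub>R \<alpha>" by (simp add: z_def)
      then have nxz: "norm (x - z) = \<bar>\<alpha> \<bullet> x\<bar> / 2 * sqrt 2" using na by simp
      have nxz2: "norm (x - z) \<le> \<bar>\<alpha> \<bullet> x\<bar>"
      proof -
        have "\<bar>\<alpha> \<bullet> x\<bar> / 2 * sqrt 2 \<le> \<bar>\<alpha> \<bullet> x\<bar> / 2 * 2" using s2 by (intro mult_left_mono) auto
        then show ?thesis using nxz by simp
      qed
      define y where "y r = z + r *\<^sub>R (x - z)" for r
      have yK: "(y r, t) \<in> K2" "(y r, t) \<in> IC" if r: "0 \<le> r" "r \<le> 1" for r
      proof -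
        have "y r - x = (r - 1) *\<^sub>R (x - z)" by (simp add: y_def algebra_simps)
        then have "norm (y r - x) = \<bar>r - 1\<bar> * norm (x - z)" by simp
        also have "\<dots> \<le> 1 * norm (x - z)" using r by (intro mult_right_mono) auto
        finally have "norm (y r - x) \<le> min 1 (\<delta> / (2 * (2 * t0 + 1)))"
          using nxz2 small unfolding \<eta>_def by linarith
        then have "\<delta> / 2 \<le> sfun (y r) t" using near_s[of t \<delta> x "y r"] t T s d0 by linarith
        then show "(y r, t) \<in> K2" using t by (simp add: K2_def Kset_def)
        then show "(y r, t) \<in> IC" using Kset_IC[of "\<delta>/2" T "y r" t] d0 T t by (simp add: K2_def)
      qed
      define \<phi> where "\<phi> r = Du (y r, t) (\<alpha>, 0)" for r
      have lin: "linear (\<lambda>h. D2u q h (\<alpha>, 0))" for q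
        by (rule bounded_linear.linear[OF bounded_linear_compose[OF blinfun.bounded_linear_left blinfun.bounded_linear_right]])
      have dphi: "(\<phi> has_real_derivative D2u (y r, t) (x - z, 0) (\<alpha>, 0)) (at r)"
        if r: "0 \<le> r" "r \<le> 1" for r
      proof -
        have ic: "(y r, t) \<in> IC" using yK(2)[OF r] .
        have eqp: "(z, t) + r *\<^sub>R (x - z, 0) = (y r, t)" by (simp add: y_def)
        have D: "((\<lambda>p. Du p (\<alpha>, 0)) has_derivative (\<lambda>h. D2u (y r, t) h (\<alpha>, 0))) (at ((z, t) + r *\<^sub>R (x - z, 0)) within UNIV)"
          unfolding eqp using blinfun_apply_deriv[OF d2_at[OF ic]] by simp
        have "((\<lambda>r. Du ((z, t) + r *\<^sub>R (x - z, 0)) (\<alpha>, 0)) has_real_derivative D2u (y r, t) (x - z, 0) (\<alpha>, 0)) (at r within UNIV)"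
          by (rule line_deriv_within[OF D _ lin]) auto
        moreover have "(\<lambda>r. Du ((z, t) + r *\<^sub>R (x - z, 0)) (\<alpha>, 0)) = \<phi>"
          by (simp add: \<phi>_def y_def fun_eq_iff)
        ultimately show ?thesis by simp
      qed
      obtain \<xi> where xi: "0 < \<xi>" "\<xi> < 1" "\<phi> 1 - \<phi> 0 = (1 - 0) * D2u (y \<xi>, t) (x - z, 0) (\<alpha>, 0)"
        using MVT2[of 0 1 \<phi> "\<lambda>r. D2u (y r, t) (x - z, 0) (\<alpha>, 0)"] dphi by auto
      have p1: "\<phi> 1 = Du (x, t) (\<alpha>, 0)" by (simp add: \<phi>_def y_def)
      have y0: "y 0 = z" by (simp add: y_def)
      have "Du (z, t) (\<alpha>, 0) = 0" using vanish[OF _ a az kn] yK(2)[of 0] y0 by simp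
      then have p0: "\<phi> 0 = 0" by (simp add: \<phi>_def y0)
      have xiK: "(y \<xi>, t) \<in> K2" using yK(1)[of \<xi>] xi by simp
      have "\<bar>Du (x, t) (\<alpha>, 0)\<bar> = \<bar>D2u (y \<xi>, t) (x - z, 0) (\<alpha>, 0)\<bar>" using xi p1 p0 by simp
      also have "\<dots> \<le> norm (D2u (y \<xi>, t)) * norm (x - z, 0::real) * norm (\<alpha>, 0::real)"
        by (rule blinfun2_bound)
      also have "\<dots> = norm (D2u (y \<xi>, t)) * (\<bar>\<alpha> \<bullet> x\<bar> / 2 * sqrt 2) * sqrt 2"
      proof -
        have e1: "norm (x - z, 0::real) = \<bar>\<alpha> \<bullet> x\<bar> / 2 * sqrt 2" using nxz by (simp add: norm_Pair)
        have e2: "norm (\<alpha>, 0::real) = sqrt 2" using na by (simp add: norm_Pair)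
        show ?thesis by (simp only: e1 e2)
      qed
      also have "\<dots> \<le> B2 * (\<bar>\<alpha> \<bullet> x\<bar> / 2 * sqrt 2) * sqrt 2"
        using B2(2) xiK by (intro mult_right_mono) auto
      also have "\<dots> = B2 * \<bar>\<alpha> \<bullet> x\<bar>" by simp
      finally have "\<bar>Du (x, t) (\<alpha>, 0)\<bar> \<le> B2 * \<bar>\<alpha> \<bullet> x\<bar>" .
      then have "\<bar>Du (x, t) (\<alpha>, 0)\<bar> / \<bar>\<alpha> \<bullet> x\<bar> \<le> B2" using ax by (simp add: divide_le_eq)
      moreover have "0 \<le> B1 * 2 / \<eta>" using B1(1) e0 by simp
      ultimately show ?thesis unfolding Q0_def abs_divide by linarith
    qed
  qed
  have main: "\<bar>k \<alpha> * Du (x, t) (\<alpha>, 0) / (\<alpha> \<bullet> x)\<bar> \<le> Kmax * Q0"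
    if a: "\<alpha> \<in> Rp" and t: "0 < t" "t \<le> T" and s: "\<delta> \<le> sfun x t" and ax: "\<alpha> \<bullet> x \<noteq> 0" for \<alpha> x t
  proof (cases "k \<alpha> = 0")
    case True then show ?thesis using Km Q0 by simp
  next
    case False
    have ka: "0 \<le> k \<alpha>" using a Rp_sub k_nonneg by auto
    have "\<bar>k \<alpha> * Du (x, t) (\<alpha>, 0) / (\<alpha> \<bullet> x)\<bar> = k \<alpha> * \<bar>Du (x, t) (\<alpha>, 0) / (\<alpha> \<bullet> x)\<bar>"
      using ka by (simp add: abs_mult)
    also have "\<dots> \<le> Kmax * Q0" using ratio[OF a t s ax False] kle[OF a] ka Q0 by (intro mult_mono) auto
    finally show ?thesis .
  qed
  show ?thesis using main Km Q0 by (intro exI[of _ "Kmax * Q0"]) auto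
qed

end

lemma D_maxsq: "((\<lambda>r. (max (r - d) 0)\<^sup>2) has_real_derivative 2 * max (r - d) 0) (at r)"
proof (cases "r = d")
  case True
  have "((\<lambda>y. ((max (y - d) 0)\<^sup>2 - (max (r - d) 0)\<^sup>2) / (y - r)) \<longlongrightarrow> 0) (at r)"
  proof (rule Lim_null_comparison)
    show "eventually (\<lambda>y. norm (((max (y - d) 0)\<^sup>2 - (max (r - d) 0)\<^sup>2) / (y - r)) \<le> \<bar>y - r\<bar>) (at r)"
    proof (rule always_eventually, rule allI)
      fix y
      show "norm (((max (y - d) 0)\<^sup>2 - (max (r - d) 0)\<^sup>2) / (y - r)) \<le> \<bar>y - r\<bar>"
      proof (cases "y > d")
        case True
        then show ?thesis using \<open>r = d\<close> by (simp add: power2_eq_square abs_mult)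
      next
        case False
        then show ?thesis using \<open>r = d\<close> by simp
      qed
    qed
    have "((\<lambda>y. \<bar>y - r\<bar>) \<longlongrightarrow> \<bar>r - r\<bar>) (at r)" by (intro tendsto_intros)
    then show "((\<lambda>y. \<bar>y - r\<bar>) \<longlongrightarrow> 0) (at r)" by simp
  qed
  then show ?thesis using True by (simp add: has_field_derivative_iff)
next
  case False
  show ?thesis
  proof (cases "r > d")
    case True
    have "((\<lambda>r. (r - d)\<^sup>2) has_real_derivative 2 * (r - d)) (at r)"
      by (auto intro!: derivative_eq_intros)
    moreover have "2 * max (r - d) 0 = 2 * (r - d)" using True by simp
    ultimately show ?thesis
      by (metis (no_types, lifting) has_field_derivative_transform_within_open[where S="{d<..}"]
          open_greaterThan greaterThan_iff True max.absorb1 less_imp_le diff_ge_0_iff_ge)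
  next
    case F2: False
    then have "r < d" using False by simp
    have "((\<lambda>r. 0) has_real_derivative 0) (at r)" by simp
    then have "((\<lambda>r. (max (r - d) 0)\<^sup>2) has_real_derivative 0) (at r)"
      by (rule has_field_derivative_transform_within_open[where S="{..<d}"]) (use \<open>r < d\<close> in auto)
    moreover have "2 * max (r - d) 0 = 0" using \<open>r < d\<close> by simp
    ultimately show ?thesis by simp
  qed
qed

lemma cont_cutoff:
  fixes \<phi> H :: "'b::t2_space \<Rightarrow> real"
  assumes "continuous_on U \<phi>" "closed K" "\<And>y. y \<in> U \<Longrightarrow> y \<notin> K \<Longrightarrow> \<phi> y = 0" "open A" "K \<subseteq> A"
    "continuous_on (A \<inter> U) H"
  shows "continuous_on U (\<lambda>y. \<phi> y * H y)"
proof -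
  have U: "U = (U \<inter> A) \<union> (U \<inter> (- K))" using assms(5) by auto
  have c1: "continuous_on (U \<inter> A) (\<lambda>y. \<phi> y * H y)"
    by (intro continuous_on_mult continuous_on_subset[OF assms(1)] continuous_on_subset[OF assms(6)]) auto
  have c2: "continuous_on (U \<inter> (- K)) (\<lambda>y. \<phi> y * H y)"
  proof (rule continuous_on_eq[OF continuous_on_const[of _ 0]])
    show "\<And>x. x \<in> U \<inter> - K \<Longrightarrow> 0 = \<phi> x * H x" using assms(3) by auto
  qed
  show ?thesis
  proof (rule continuous_on_eq_continuous_within[THEN iffD2], rule ballI)
    fix y assume y: "y \<in> U"
    show "continuous (at y within U) (\<lambda>y. \<phi> y * H y)"
    proof (cases "y \<in> A")
      case True
      have "continuous (at y within U \<inter> A) (\<lambda>y. \<phi> y * H y)"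
        using c1 True y by (simp add: continuous_on_eq_continuous_within)
      moreover have "at y within U \<inter> A = at y within U"
        by (rule at_within_nhd[of _ A]) (use True assms(4) in auto)
      ultimately show ?thesis by simp
    next
      case False
      then have yK: "y \<in> - K" using assms(5) by auto
      have "continuous (at y within U \<inter> - K) (\<lambda>y. \<phi> y * H y)"
        using c2 yK y by (simp add: continuous_on_eq_continuous_within)
      moreover have "at y within U \<inter> - K = at y within U"
        by (rule at_within_nhd[of _ "- K"]) (use yK assms(2) in auto)
      ultimately show ?thesis by simp
    qed
  qed
qed

context dsetup begin

definition chi :: "real \<Rightarrow> real \<Rightarrow> real" where "chi d r = (max (r - d) 0)\<^sup>2"
definition chi' :: "real \<Rightarrow> real \<Rightarrow> real" where "chi' d r = 2 * max (r - d) 0"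
definition psi where "psi d x t = chi d (sfun x t)"
definition wt :: "real \<Rightarrow> 'a \<Rightarrow> real" where "wt e x = exp (\<Sum>\<alpha>\<in>Rp. k \<alpha> * ln ((\<alpha> \<bullet> x)\<^sup>2 + e))"
definition dwt :: "real \<Rightarrow> 'a \<Rightarrow> 'a \<Rightarrow> real" where
  "dwt e b x = wt e x * (\<Sum>\<alpha>\<in>Rp. k \<alpha> * (2 * (\<alpha> \<bullet> x) * (\<alpha> \<bullet> b) / ((\<alpha> \<bullet> x)\<^sup>2 + e)))"
definition ut where "ut p = Du p (0, 1)"
definition gx where "gx b p = Du p (b, 0)"
definition en where "en p = (ut p)\<^sup>2 + (\<Sum>b\<in>Basis. (gx b p)\<^sup>2)"
definition ent where "ent p = 2 * ut p * D2u p (0, 1) (0, 1) + 2 * (\<Sum>b\<in>Basis. gx b p * D2u p (0, 1) (b, 0))"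

lemma chi_zero: "r \<le> d \<Longrightarrow> chi d r = 0" by (simp add: chi_def)
lemma chi'_zero: "r \<le> d \<Longrightarrow> chi' d r = 0" by (simp add: chi'_def)
lemma chi_nonneg: "0 \<le> chi d r" by (simp add: chi_def)
lemma chi'_nonneg: "0 \<le> chi' d r" by (simp add: chi'_def)
lemma D_chi: "(chi d has_real_derivative chi' d r) (at r)"
  using D_maxsq[of d r] by (simp add: chi_def[abs_def] chi'_def)
lemma cont_chi: "continuous_on S (chi d)" unfolding chi_def[abs_def] by (intro continuous_intros)
lemma cont_chi': "continuous_on S (chi' d)" unfolding chi'_def[abs_def] by (intro continuous_intros)

lemma sfun_line: "sfun (x + r *\<^sub>R b) t = (t0 - t)\<^sup>2 - ((norm (x - x0))\<^sup>2 + 2 * r * ((x - x0) \<bullet> b) + r\<^sup>2 * (b \<bullet> b))"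
proof -
  have e: "x + r *\<^sub>R b - x0 = (x - x0) + r *\<^sub>R b" by simp
  show ?thesis unfolding sfun_def e power2_norm_eq_inner
    by (simp add: inner_add_left inner_add_right inner_commute power2_eq_square algebra_simps)
qed

lemma D_psi_t: "((\<lambda>t. psi d x t) has_real_derivative chi' d (sfun x t) * (- 2 * (t0 - t))) (at t)"
proof -
  have "((\<lambda>t. sfun x t) has_real_derivative - 2 * (t0 - t)) (at t)"
    unfolding sfun_def by (auto intro!: derivative_eq_intros)
  from DERIV_chain2[OF D_chi this] show ?thesis by (simp add: psi_def)
qed

lemma D_psi_x: "((\<lambda>r. psi d (x + r *\<^sub>R b) t) has_real_derivative chi' d (sfun x t) * (- 2 * ((x - x0) \<bullet> b))) (at 0)"
proof -
  have "((\<lambda>r. sfun (x + r *\<^sub>R b) t) has_real_derivative - 2 * ((x - x0) \<bullet> b)) (at 0)"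
    unfolding sfun_line by (auto intro!: derivative_eq_intros)
  from DERIV_chain2[OF D_chi this] show ?thesis by (simp add: psi_def)
qed

lemma wt_pos: "0 < wt e x" by (simp add: wt_def)

lemma D_wt_x:
  assumes e: "0 < e"
  shows "((\<lambda>r. wt e (x + r *\<^sub>R b)) has_real_derivative dwt e b x) (at 0)"
proof -
  have pos: "0 < (\<alpha> \<bullet> x + r * (\<alpha> \<bullet> b))\<^sup>2 + e" for \<alpha> r using e by (simp add: add_nonneg_pos)
  have dq: "((\<lambda>r. (\<alpha> \<bullet> x + r * (\<alpha> \<bullet> b))\<^sup>2 + e) has_real_derivative 2 * (\<alpha> \<bullet> x) * (\<alpha> \<bullet> b)) (at 0)" for \<alpha>
    by (auto intro!: derivative_eq_intros)
  have dl: "((\<lambda>r. k \<alpha> * ln ((\<alpha> \<bullet> x + r * (\<alpha> \<bullet> b))\<^sup>2 + e)) has_real_derivative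
      k \<alpha> * (2 * (\<alpha> \<bullet> x) * (\<alpha> \<bullet> b) / ((\<alpha> \<bullet> x)\<^sup>2 + e))) (at 0)" for \<alpha>
    using DERIV_cmult[OF DERIV_chain2[OF DERIV_ln_divide[OF pos[of \<alpha> 0]] dq], of "k \<alpha>"] by simp
  have ds: "((\<lambda>r. \<Sum>\<alpha>\<in>Rp. k \<alpha> * ln ((\<alpha> \<bullet> x + r * (\<alpha> \<bullet> b))\<^sup>2 + e)) has_real_derivative
      (\<Sum>\<alpha>\<in>Rp. k \<alpha> * (2 * (\<alpha> \<bullet> x) * (\<alpha> \<bullet> b) / ((\<alpha> \<bullet> x)\<^sup>2 + e)))) (at 0)"
    by (rule DERIV_sum) (rule dl)
  have "((\<lambda>r. exp (\<Sum>\<alpha>\<in>Rp. k \<alpha> * ln ((\<alpha> \<bullet> x + r * (\<alpha> \<bullet> b))\<^sup>2 + e))) has_real_derivative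
      exp (\<Sum>\<alpha>\<in>Rp. k \<alpha> * ln ((\<alpha> \<bullet> x + 0 * (\<alpha> \<bullet> b))\<^sup>2 + e)) *
      (\<Sum>\<alpha>\<in>Rp. k \<alpha> * (2 * (\<alpha> \<bullet> x) * (\<alpha> \<bullet> b) / ((\<alpha> \<bullet> x)\<^sup>2 + e)))) (at 0)"
    by (rule DERIV_chain2[OF DERIV_exp ds])
  moreover have "(\<lambda>r. wt e (x + r *\<^sub>R b)) = (\<lambda>r. exp (\<Sum>\<alpha>\<in>Rp. k \<alpha> * ln ((\<alpha> \<bullet> x + r * (\<alpha> \<bullet> b))\<^sup>2 + e)))"
    by (simp add: wt_def inner_add_right fun_eq_iff)
  ultimately show ?thesis by (simp add: dwt_def wt_def)
qed

end

context dsetup begin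

definition fE where "fE d e t x = psi d x t * wt e x * en (x, t)"
definition fxE where "fxE d e t x = chi' d (sfun x t) * (- 2 * (t0 - t)) * wt e x * en (x, t) + psi d x t * wt e x * ent (x, t)"
definition GB where "GB d e b t x = psi d x t * wt e x * ut (x, t) * gx b (x, t)"
definition DGB where "DGB d e b t x =
   chi' d (sfun x t) * (- 2 * ((x - x0) \<bullet> b)) * wt e x * ut (x, t) * gx b (x, t)
 + psi d x t * dwt e b x * ut (x, t) * gx b (x, t)
 + psi d x t * wt e x * D2u (x, t) (b, 0) (0, 1) * gx b (x, t)
 + psi d x t * wt e x * ut (x, t) * D2u (x, t) (b, 0) (b, 0)"

lemma lin2: "linear (\<lambda>h. blinfun_apply (blinfun_apply (X :: 'c::real_normed_vector \<Rightarrow>\<^sub>L 'c \<Rightarrow>\<^sub>L real) h) v)"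
  by (rule bounded_linear.linear[OF bounded_linear_compose[OF blinfun.bounded_linear_left blinfun.bounded_linear_right]])

lemma D_Du_t:
  assumes "(x, t) \<in> LC" "\<And>t'. t' \<in> X \<Longrightarrow> (x, t') \<in> LC" "t \<in> X"
  shows "((\<lambda>t'. Du (x, t') v) has_real_derivative D2u (x, t) (0, 1) v) (at t within X)"
proof -
  have eqp: "(x, 0) + t *\<^sub>R (0, 1) = (x, t)" by simp
  have D: "((\<lambda>p. Du p v) has_derivative (\<lambda>h. D2u (x, t) h v)) (at ((x, 0) + t *\<^sub>R (0, 1)) within LC)"
    unfolding eqp using blinfun_apply_deriv[of Du "D2u (x, t)" "(x, t)" LC v] d2 assms(1) by auto
  have "((\<lambda>r. Du ((x, 0) + r *\<^sub>R (0, 1)) v) has_real_derivative D2u (x, t) (0, 1) v) (at t within X)"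
    by (rule line_deriv_within[OF D _ lin2 assms(3)]) (use assms(2) in simp)
  then show ?thesis by simp
qed

lemma D_Du_x:
  assumes "(x, t) \<in> IC"
  shows "((\<lambda>r. Du (x + r *\<^sub>R b, t) v) has_real_derivative D2u (x, t) (b, 0) v) (at 0)"
proof -
  have eqp: "(x, t) + 0 *\<^sub>R (b, 0) = (x, t)" by simp
  have D: "((\<lambda>p. Du p v) has_derivative (\<lambda>h. D2u (x, t) h v)) (at ((x, t) + 0 *\<^sub>R (b, 0)) within UNIV)"
    unfolding eqp using blinfun_apply_deriv[OF d2_at[OF assms], of v] by simp
  have "((\<lambda>r. Du ((x, t) + r *\<^sub>R (b, 0)) v) has_real_derivative D2u (x, t) (b, 0) v) (at 0 within UNIV)"
    by (rule line_deriv_within[OF D _ lin2]) auto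
  then show ?thesis by simp
qed

lemma open_sfun_t: "open {t'. sfun x t' < d}"
  unfolding sfun_def by (intro open_Collect_less continuous_intros)

lemma open_sfun_x: "open {r. sfun (x + r *\<^sub>R b) t < d}"
  unfolding sfun_def by (intro open_Collect_less continuous_intros)

lemma E1:
  assumes d: "0 < d" and T: "T < t0" and t: "t \<in> {0..T}"
  shows "((\<lambda>t. fE d e t x) has_real_derivative fxE d e t x) (at t within {0..T})"
proof (cases "sfun x t < d")
  case True
  have "((\<lambda>t. 0) has_real_derivative 0) (at t)" by simp
  then have "((\<lambda>t. fE d e t x) has_real_derivative 0) (at t)"
  proof (rule has_field_derivative_transform_within_open[OF _ open_sfun_t[of x d]])
    show "t \<in> {t'. sfun x t' < d}" using True by simp
    fix t' assume "t' \<in> {t'. sfun x t' < d}"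
    then show "0 = fE d e t' x" by (simp add: fE_def psi_def chi_zero)
  qed
  moreover have "fxE d e t x = 0" using True by (simp add: fxE_def psi_def chi_zero chi'_zero)
  ultimately show ?thesis using has_field_derivative_at_within by simp
next
  case False
  then have sp: "0 < sfun x t" using d by simp
  have tT: "0 \<le> t" "t \<le> T" using t by auto
  define c where "c = t0 - norm (x - x0)"
  have tc: "t < c" using sfun_pos_norm[OF sp] tT T by (simp add: c_def)
  define X where "X = {0..T} \<inter> {..c}"
  have tX: "t \<in> X" using t tc by (simp add: X_def)
  have XL: "(x, t') \<in> LC" if "t' \<in> X" for t' using that by (auto simp: X_def c_def light_cone_def)
  have xt: "(x, t) \<in> LC" using XL[OF tX] .
  have dpsi: "((\<lambda>t. psi d x t) has_real_derivative chi' d (sfun x t) * (- 2 * (t0 - t))) (at t within X)"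
    using D_psi_t has_field_derivative_at_within by blast
  have dut: "((\<lambda>t'. ut (x, t')) has_real_derivative D2u (x, t) (0, 1) (0, 1)) (at t within X)"
    unfolding ut_def by (rule D_Du_t[OF xt XL tX])
  have dgb: "((\<lambda>t'. gx b (x, t')) has_real_derivative D2u (x, t) (0, 1) (b, 0)) (at t within X)" for b
    unfolding gx_def by (rule D_Du_t[OF xt XL tX])
  have den: "((\<lambda>t'. en (x, t')) has_real_derivative ent (x, t)) (at t within X)"
  proof -
    have a: "((\<lambda>t'. ut (x, t') * ut (x, t')) has_real_derivative
        ut (x, t) * D2u (x, t) (0, 1) (0, 1) + D2u (x, t) (0, 1) (0, 1) * ut (x, t)) (at t within X)"
      by (rule DERIV_mult'[OF dut dut])
    have b: "((\<lambda>t'. \<Sum>b\<in>Basis. gx b (x, t') * gx b (x, t')) has_real_derivative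
        (\<Sum>b\<in>Basis. gx b (x, t) * D2u (x, t) (0, 1) (b, 0) + D2u (x, t) (0, 1) (b, 0) * gx b (x, t))) (at t within X)"
      by (rule DERIV_sum) (rule DERIV_mult'[OF dgb dgb])
    from DERIV_add[OF a b] show ?thesis
      by (simp add: en_def ent_def power2_eq_square sum.distrib[symmetric] sum_distrib_left algebra_simps)
  qed
  have dw: "((\<lambda>t'. wt e x) has_real_derivative 0) (at t within X)" by simp
  have dX: "((\<lambda>t. fE d e t x) has_real_derivative fxE d e t x) (at t within X)"
    unfolding fE_def by (rule DERIV_cong[OF DERIV_mult'[OF DERIV_mult'[OF dpsi dw] den]]) (simp add: fxE_def algebra_simps)
  have "at t within X = at t within {0..T}"
    by (rule at_within_nhd[of _ "{..<c}"]) (use tc in \<open>auto simp: X_def\<close>)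
  then show ?thesis using dX by simp
qed

lemma E3:
  assumes d: "0 < d" and e: "0 < e" and T: "T < t0" and t: "0 < t" "t \<le> T"
  shows "((\<lambda>r. GB d e b t (x + r *\<^sub>R b)) has_real_derivative DGB d e b t x) (at 0)"
proof (cases "sfun x t < d")
  case True
  have "((\<lambda>r. 0) has_real_derivative 0) (at 0)" by simp
  then have "((\<lambda>r. GB d e b t (x + r *\<^sub>R b)) has_real_derivative 0) (at 0)"
  proof (rule has_field_derivative_transform_within_open[OF _ open_sfun_x[of x b t d]])
    show "0 \<in> {r. sfun (x + r *\<^sub>R b) t < d}" using True by simp
    fix r assume "r \<in> {r. sfun (x + r *\<^sub>R b) t < d}"
    then show "0 = GB d e b t (x + r *\<^sub>R b)" by (simp add: GB_def psi_def chi_zero)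
  qed
  moreover have "DGB d e b t x = 0" using True by (simp add: DGB_def psi_def chi_zero chi'_zero)
  ultimately show ?thesis by simp
next
  case False
  then have sp: "0 < sfun x t" using d by simp
  have xt: "(x, t) \<in> IC" using sfun_pos_norm[OF sp] t T by (simp add: IC_def)
  have dpsi: "((\<lambda>r. psi d (x + r *\<^sub>R b) t) has_real_derivative chi' d (sfun x t) * (- 2 * ((x - x0) \<bullet> b))) (at 0)"
    by (rule D_psi_x)
  have dw: "((\<lambda>r. wt e (x + r *\<^sub>R b)) has_real_derivative dwt e b x) (at 0)" by (rule D_wt_x[OF e])
  have dut: "((\<lambda>r. ut (x + r *\<^sub>R b, t)) has_real_derivative D2u (x, t) (b, 0) (0, 1)) (at 0)"
    unfolding ut_def by (rule D_Du_x[OF xt])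
  have dg: "((\<lambda>r. gx b (x + r *\<^sub>R b, t)) has_real_derivative D2u (x, t) (b, 0) (b, 0)) (at 0)"
    unfolding gx_def by (rule D_Du_x[OF xt])
  show ?thesis
    unfolding GB_def by (rule DERIV_cong[OF DERIV_mult'[OF DERIV_mult'[OF DERIV_mult'[OF dpsi dw] dut] dg]]) (simp add: DGB_def algebra_simps)
qed

end

context dsetup begin

lemma cont_Du_comp:
  assumes "continuous_on S g" "g ` S \<subseteq> LC"
  shows "continuous_on S (\<lambda>y. Du (g y) v)"
  using blinfun.continuous_on[OF continuous_on_compose2[OF cDu assms(1,2)] continuous_on_const] by simp

lemma cont_D2u_comp:
  assumes "continuous_on S g" "g ` S \<subseteq> LC"
  shows "continuous_on S (\<lambda>y. D2u (g y) v w)"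
proof -
  have "continuous_on S (\<lambda>y. D2u (g y) v)"
    using blinfun.continuous_on[OF continuous_on_compose2[OF cD2 assms(1,2)] continuous_on_const] by simp
  then show ?thesis using blinfun.continuous_on[OF _ continuous_on_const] by blast
qed

lemma cont_wt:
  assumes "0 < e" "continuous_on S h"
  shows "continuous_on S (\<lambda>y. wt e (h y))"
proof -
  have ne: "\<And>z::real. z\<^sup>2 + e \<noteq> 0" using assms(1) by (metis add_nonneg_pos less_irrefl zero_le_power2)
  show ?thesis unfolding wt_def by (intro continuous_intros assms(2)) (use ne in auto)
qed

lemma cont_dwt:
  assumes "0 < e" "continuous_on S h"
  shows "continuous_on S (\<lambda>y. dwt e b (h y))"
proof -
  have ne: "\<And>z::real. z\<^sup>2 + e \<noteq> 0" using assms(1) by (metis add_nonneg_pos less_irrefl zero_le_power2)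
  show ?thesis unfolding dwt_def by (intro continuous_intros cont_wt assms) (use ne in auto)
qed

lemma closed_K: "closed {y :: real \<times> 'a. d \<le> sfun (snd y) (fst y) \<and> fst y \<le> T}"
proof -
  have "{y :: real \<times> 'a. d \<le> sfun (snd y) (fst y) \<and> fst y \<le> T}
    = {y. d \<le> (t0 - fst y)\<^sup>2 - (norm (snd y - x0))\<^sup>2} \<inter> {y. fst y \<le> T}" by (auto simp: sfun_def)
  moreover have "closed {y :: real \<times> 'a. d \<le> (t0 - fst y)\<^sup>2 - (norm (snd y - x0))\<^sup>2}"
    by (intro closed_Collect_le continuous_intros)
  moreover have "closed {y :: real \<times> 'a. fst y \<le> T}" by (intro closed_Collect_le continuous_intros)
  ultimately show ?thesis by auto
qed

lemma closed_Kx: "closed {x. d \<le> sfun x t}"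
  unfolding sfun_def by (intro closed_Collect_le continuous_intros)

lemma open_A: "open {y :: real \<times> 'a. norm (snd y - x0) < t0 - fst y}"
  by (intro open_Collect_less continuous_intros)

lemma open_Ax: "open {x. norm (x - x0) < t0 - t}"
  by (intro open_Collect_less continuous_intros)

lemma cont_sfun2: "continuous_on S (\<lambda>y :: real \<times> 'a. sfun (snd y) (fst y))"
  unfolding sfun_def by (intro continuous_intros)

lemma cont_sfunx: "continuous_on S (\<lambda>x. sfun x t)"
  unfolding sfun_def by (intro continuous_intros)

lemma C_fxE:
  assumes d: "0 < d" and e: "0 < e" and T: "T < t0"
  shows "continuous_on ({0..T} \<times> UNIV) (\<lambda>(t, x). fxE d e t x)"
proof -
  define U where "U = ({0..T} \<times> (UNIV :: 'a set))"
  define K where "K = {y :: real \<times> 'a. d \<le> sfun (snd y) (fst y) \<and> fst y \<le> T}"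
  define A where "A = {y :: real \<times> 'a. norm (snd y - x0) < t0 - fst y}"
  have KA: "K \<subseteq> A"
  proof
    fix y assume "y \<in> K"
    then have "0 < sfun (snd y) (fst y)" "fst y < t0" using d T by (auto simp: K_def)
    then show "y \<in> A" using sfun_pos_norm by (auto simp: A_def)
  qed
  define g where "g y = (snd y, fst y)" for y :: "real \<times> 'a"
  have cg: "continuous_on S g" for S unfolding g_def by (intro continuous_intros)
  have gL: "g ` (A \<inter> U) \<subseteq> LC" by (auto simp: g_def A_def U_def light_cone_def)
  note cD = cont_Du_comp[OF cg gL] and cD2' = cont_D2u_comp[OF cg gL]
  have cH1: "continuous_on (A \<inter> U) (\<lambda>y. (- 2 * (t0 - fst y)) * wt e (snd y) * en (snd y, fst y))"
    using cD[unfolded g_def] unfolding en_def ut_def gx_def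
    by (intro cD[unfolded g_def] cD2'[unfolded g_def] continuous_intros cont_wt e)
  have cH2: "continuous_on (A \<inter> U) (\<lambda>y. wt e (snd y) * ent (snd y, fst y))"
    using cD[unfolded g_def] cD2'[unfolded g_def] unfolding ent_def ut_def gx_def
    by (intro cD[unfolded g_def] cD2'[unfolded g_def] continuous_intros cont_wt e)
  have z: "\<And>y. y \<in> U \<Longrightarrow> y \<notin> K \<Longrightarrow> chi' d (sfun (snd y) (fst y)) = 0"
     "\<And>y. y \<in> U \<Longrightarrow> y \<notin> K \<Longrightarrow> chi d (sfun (snd y) (fst y)) = 0"
    by (auto simp: U_def K_def chi_zero chi'_zero)
  have c1: "continuous_on U (\<lambda>y. chi' d (sfun (snd y) (fst y)) * ((- 2 * (t0 - fst y)) * wt e (snd y) * en (snd y, fst y)))"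
    by (rule cont_cutoff[OF continuous_on_compose2[OF cont_chi' cont_sfun2] _ z(1) _ KA cH1])
       (auto simp: K_def A_def intro: closed_K open_A)
  have c2: "continuous_on U (\<lambda>y. chi d (sfun (snd y) (fst y)) * (wt e (snd y) * ent (snd y, fst y)))"
    by (rule cont_cutoff[OF continuous_on_compose2[OF cont_chi cont_sfun2] _ z(2) _ KA cH2])
       (auto simp: K_def A_def intro: closed_K open_A)
  have "continuous_on U (\<lambda>y. chi' d (sfun (snd y) (fst y)) * ((- 2 * (t0 - fst y)) * wt e (snd y) * en (snd y, fst y))
       + chi d (sfun (snd y) (fst y)) * (wt e (snd y) * ent (snd y, fst y)))"
    by (rule continuous_on_add[OF c1 c2])
  moreover have "(\<lambda>(t, x). fxE d e t x) = (\<lambda>y. chi' d (sfun (snd y) (fst y)) * ((- 2 * (t0 - fst y)) * wt e (snd y) * en (snd y, fst y))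
       + chi d (sfun (snd y) (fst y)) * (wt e (snd y) * ent (snd y, fst y)))"
    by (auto simp: fxE_def psi_def fun_eq_iff algebra_simps)
  ultimately show ?thesis by (simp add: U_def)
qed

lemma C_x_generic:
  fixes H :: "'a \<Rightarrow> real" and cf :: "real \<Rightarrow> real"
  assumes d: "0 < d" and T: "T < t0" and t: "0 \<le> t" "t \<le> T"
    and H: "continuous_on {x. norm (x - x0) < t0 - t} H"
    and cf: "continuous_on UNIV (\<lambda>x. cf (sfun x t))" and cz: "\<And>r. r \<le> d \<Longrightarrow> cf r = 0"
  shows "continuous_on UNIV (\<lambda>x. cf (sfun x t) * H x)"
proof (rule cont_cutoff[where K="{x. d \<le> sfun x t}" and A="{x. norm (x - x0) < t0 - t}"])
  show "continuous_on UNIV (\<lambda>x. cf (sfun x t))" by (rule cf)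
  show "closed {x. d \<le> sfun x t}" by (rule closed_Kx)
  show "open {x. norm (x - x0) < t0 - t}" by (rule open_Ax)
  show "\<And>y. y \<in> UNIV \<Longrightarrow> y \<notin> {x. d \<le> sfun x t} \<Longrightarrow> cf (sfun y t) = 0" using cz by auto
  show "{x. d \<le> sfun x t} \<subseteq> {x. norm (x - x0) < t0 - t}"
    using sfun_pos_norm d t T by force
  show "continuous_on ({x. norm (x - x0) < t0 - t} \<inter> UNIV) H" using H by simp
qed

lemma xL: "0 \<le> t \<Longrightarrow> (\<lambda>x. (x, t)) ` {x. norm (x - x0) < t0 - t} \<subseteq> LC"
  by (auto simp: light_cone_def)

lemma cxt: "continuous_on S (\<lambda>x::'a. (x, t))" by (intro continuous_intros)

lemma C_fE:
  assumes d: "0 < d" and e: "0 < e" and T: "T < t0" and t: "0 \<le> t" "t \<le> T"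
  shows "continuous_on UNIV (fE d e t)"
proof -
  note cD = cont_Du_comp[OF cxt xL[OF t(1)]]
  have "continuous_on UNIV (\<lambda>x. chi d (sfun x t) * (wt e x * en (x, t)))"
  proof (rule C_x_generic[OF d T t])
    show "continuous_on {x. norm (x - x0) < t0 - t} (\<lambda>x. wt e x * en (x, t))"
      unfolding en_def ut_def gx_def by (intro cD continuous_intros cont_wt e)
    show "continuous_on UNIV (\<lambda>x. chi d (sfun x t))" by (rule continuous_on_compose2[OF cont_chi cont_sfunx]) auto
  qed (rule chi_zero)
  then show ?thesis by (simp add: fE_def[abs_def] psi_def mult.assoc)
qed

lemma C_GB:
  assumes d: "0 < d" and e: "0 < e" and T: "T < t0" and t: "0 \<le> t" "t \<le> T"
  shows "continuous_on UNIV (GB d e b t)"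
proof -
  note cD = cont_Du_comp[OF cxt xL[OF t(1)]]
  have "continuous_on UNIV (\<lambda>x. chi d (sfun x t) * (wt e x * ut (x, t) * gx b (x, t)))"
  proof (rule C_x_generic[OF d T t])
    show "continuous_on {x. norm (x - x0) < t0 - t} (\<lambda>x. wt e x * ut (x, t) * gx b (x, t))"
      unfolding ut_def gx_def by (intro cD continuous_intros cont_wt e)
    show "continuous_on UNIV (\<lambda>x. chi d (sfun x t))" by (rule continuous_on_compose2[OF cont_chi cont_sfunx]) auto
  qed (rule chi_zero)
  then show ?thesis by (simp add: GB_def[abs_def] psi_def mult.assoc)
qed

lemma C_DGB:
  assumes d: "0 < d" and e: "0 < e" and T: "T < t0" and t: "0 \<le> t" "t \<le> T"
  shows "continuous_on UNIV (DGB d e b t)"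
proof -
  note cD = cont_Du_comp[OF cxt xL[OF t(1)]] and cD2' = cont_D2u_comp[OF cxt xL[OF t(1)]]
  have c1: "continuous_on UNIV (\<lambda>x. chi' d (sfun x t) * ((- 2 * ((x - x0) \<bullet> b)) * wt e x * ut (x, t) * gx b (x, t)))"
  proof (rule C_x_generic[OF d T t])
    show "continuous_on {x. norm (x - x0) < t0 - t} (\<lambda>x. (- 2 * ((x - x0) \<bullet> b)) * wt e x * ut (x, t) * gx b (x, t))"
      unfolding ut_def gx_def by (intro cD continuous_intros cont_wt e)
    show "continuous_on UNIV (\<lambda>x. chi' d (sfun x t))" by (rule continuous_on_compose2[OF cont_chi' cont_sfunx]) auto
  qed (rule chi'_zero)
  have c2: "continuous_on UNIV (\<lambda>x. chi d (sfun x t) * (dwt e b x * ut (x, t) * gx b (x, t)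
      + wt e x * D2u (x, t) (b, 0) (0, 1) * gx b (x, t) + wt e x * ut (x, t) * D2u (x, t) (b, 0) (b, 0)))"
  proof (rule C_x_generic[OF d T t])
    show "continuous_on {x. norm (x - x0) < t0 - t} (\<lambda>x. dwt e b x * ut (x, t) * gx b (x, t)
      + wt e x * D2u (x, t) (b, 0) (0, 1) * gx b (x, t) + wt e x * ut (x, t) * D2u (x, t) (b, 0) (b, 0))"
      unfolding ut_def gx_def by (intro cD cD2' continuous_intros cont_wt cont_dwt e)
    show "continuous_on UNIV (\<lambda>x. chi d (sfun x t))" by (rule continuous_on_compose2[OF cont_chi cont_sfunx]) auto
  qed (rule chi_zero)
  have "continuous_on UNIV (\<lambda>x. chi' d (sfun x t) * ((- 2 * ((x - x0) \<bullet> b)) * wt e x * ut (x, t) * gx b (x, t))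
     + chi d (sfun x t) * (dwt e b x * ut (x, t) * gx b (x, t)
      + wt e x * D2u (x, t) (b, 0) (0, 1) * gx b (x, t) + wt e x * ut (x, t) * D2u (x, t) (b, 0) (b, 0)))"
    by (rule continuous_on_add[OF c1 c2])
  then show ?thesis by (simp add: DGB_def[abs_def] psi_def algebra_simps)
qed

end

lemma sum_factor: "(\<And>b. b \<in> A \<Longrightarrow> f b = c * h b) \<Longrightarrow> sum f A = (c::real) * sum h A"
  by (simp add: sum_distrib_left)

context dsetup begin

lemma Du_basis: "(\<Sum>b\<in>Basis. (v \<bullet> b) * Du p (b, 0)) = Du p (v, 0)"
proof -
  have "(v, 0::real) = (\<Sum>b\<in>Basis. (v \<bullet> b) *\<^sub>R (b, 0::real))"
    by (simp add: prod_eq_iff fst_sum snd_sum euclidean_representation)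
  then have "Du p (v, 0) = Du p (\<Sum>b\<in>Basis. (v \<bullet> b) *\<^sub>R (b, 0::real))" by simp
  also have "\<dots> = (\<Sum>b\<in>Basis. Du p ((v \<bullet> b) *\<^sub>R (b, 0::real)))"
    by (simp only: blinfun.sum_right)
  also have "\<dots> = (\<Sum>b\<in>Basis. (v \<bullet> b) * Du p (b, 0))"
    by (rule sum.cong[OF refl]) (simp only: blinfun.scaleR_right real_scaleR_def)
  finally show ?thesis by simp
qed

definition gv where "gv p = (\<Sum>b\<in>Basis. gx b p *\<^sub>R b)"

lemma gv_inner: "(\<Sum>b\<in>Basis. (v \<bullet> b) * gx b p) = v \<bullet> gv p"
  by (simp add: gv_def inner_sum_right mult.commute)

lemma gv_sq: "(\<Sum>b\<in>Basis. (gx b p)\<^sup>2) = gv p \<bullet> gv p"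
proof -
  have gen: "(\<Sum>b\<in>Basis. f b *\<^sub>R b) \<bullet> g = (\<Sum>b\<in>Basis. f b * (b \<bullet> g))" for f and g :: 'a
    by (simp add: inner_sum_left)
  have "gv p \<bullet> gv p = (\<Sum>b\<in>Basis. gx b p * (b \<bullet> gv p))" using gen[of "\<lambda>b. gx b p" "gv p"] by (simp add: gv_def)
  also have "\<dots> = (\<Sum>b\<in>Basis. (gx b p)\<^sup>2)"
  proof (rule sum.cong[OF refl])
    fix b :: 'a assume b: "b \<in> Basis"
    have "gv p \<bullet> b = gx b p" unfolding gv_def using b by (rule inner_sum_left_Basis)
    then have "b \<bullet> gv p = gx b p" by (simp add: inner_commute)
    then show "gx b p * (b \<bullet> gv p) = (gx b p)\<^sup>2" by (simp add: power2_eq_square)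
  qed
  finally show ?thesis by simp
qed

lemma en_eq: "en p = (ut p)\<^sup>2 + gv p \<bullet> gv p" by (simp add: en_def gv_sq)

lemma Q_le:
  assumes "0 \<le> c" "0 < w" "norm (x - x0) \<le> t0 - t"
  shows "- 2 * c * w * ((t0 - t) * en (x, t) - 2 * ut (x, t) * (\<Sum>b\<in>Basis. ((x - x0) \<bullet> b) * gx b (x, t))) \<le> 0"
proof -
  define a where "a = ut (x, t)"
  define g where "g = gv (x, t)"
  have "2 * a * ((x - x0) \<bullet> g) \<le> 2 * \<bar>a\<bar> * (norm (x - x0) * norm g)"
  proof -
    have "a * ((x - x0) \<bullet> g) \<le> \<bar>a\<bar> * \<bar>(x - x0) \<bullet> g\<bar>" by (simp add: abs_mult[symmetric])
    also have "\<dots> \<le> \<bar>a\<bar> * (norm (x - x0) * norm g)" by (intro mult_left_mono Cauchy_Schwarz_ineq2) auto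
    finally show ?thesis by simp
  qed
  also have "\<dots> \<le> 2 * \<bar>a\<bar> * ((t0 - t) * norm g)" using assms(3) by (intro mult_left_mono mult_right_mono) auto
  also have "\<dots> \<le> (t0 - t) * (a\<^sup>2 + g \<bullet> g)"
  proof -
    have "2 * \<bar>a\<bar> * norm g \<le> a\<^sup>2 + (norm g)\<^sup>2"
      using sum_squares_bound[of "\<bar>a\<bar>" "norm g"] by (simp add: power2_eq_square algebra_simps)
    moreover have "0 \<le> t0 - t" using assms(3) norm_ge_zero order_trans by blast
    ultimately have "(t0 - t) * (2 * \<bar>a\<bar> * norm g) \<le> (t0 - t) * (a\<^sup>2 + (norm g)\<^sup>2)" by (rule mult_left_mono)
    then show ?thesis by (simp add: power2_norm_eq_inner algebra_simps)
  qed
  finally have "2 * a * ((x - x0) \<bullet> g) \<le> (t0 - t) * (a\<^sup>2 + g \<bullet> g)" .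
  then have "0 \<le> (t0 - t) * en (x, t) - 2 * ut (x, t) * (\<Sum>b\<in>Basis. ((x - x0) \<bullet> b) * gx b (x, t))"
    by (simp add: en_eq gv_inner a_def g_def)
  moreover have "0 \<le> 2 * c * w" using assms by simp
  ultimately show ?thesis by (simp add: mult_nonneg_nonneg)
qed

lemma ptwise:
  assumes d: "0 < d" and e: "0 < e" and T: "T < t0" and t: "0 < t" "t \<le> T" and gd: "good x"
    and s: "d \<le> sfun x t"
  shows "fxE d e t x - 2 * (\<Sum>b\<in>Basis. DGB d e b t x) =
    - 2 * chi' d (sfun x t) * wt e x * ((t0 - t) * en (x, t) - 2 * ut (x, t) * (\<Sum>b\<in>Basis. ((x - x0) \<bullet> b) * gx b (x, t)))
    + 4 * psi d x t * wt e x * ut (x, t) * (\<Sum>\<alpha>\<in>Rp. k \<alpha> * (Du (x, t) (\<alpha>, 0) / (\<alpha> \<bullet> x)) * (e / ((\<alpha> \<bullet> x)\<^sup>2 + e)))"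
proof -
  have sp: "0 < sfun x t" using d s by simp
  have xt: "(x, t) \<in> IC" using sfun_pos_norm[OF sp] t T by (simp add: IC_def)
  define c' where "c' = chi' d (sfun x t)"
  define ps where "ps = psi d x t"
  define w where "w = wt e x"
  define u1 where "u1 = ut (x, t)"
  define S1 where "S1 = (\<Sum>b\<in>Basis. ((x - x0) \<bullet> b) * gx b (x, t))"
  define S3 where "S3 = (\<Sum>b\<in>Basis. D2u (x, t) (b, 0) (0, 1) * gx b (x, t))"
  define lap where "lap = (\<Sum>b\<in>Basis. D2u (x, t) (b, 0) (b, 0))"
  define U where "U = D2u (x, t) (0, 1) (0, 1)"
  define Sq where "Sq = (\<Sum>\<alpha>\<in>Rp. k \<alpha> * Du (x, t) (\<alpha>, 0) / (\<alpha> \<bullet> x))"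
  define Sr where "Sr = (\<Sum>\<alpha>\<in>Rp. k \<alpha> * (2 * (\<alpha> \<bullet> x) / ((\<alpha> \<bullet> x)\<^sup>2 + e)) * Du (x, t) (\<alpha>, 0))"
  define Se where "Se = (\<Sum>\<alpha>\<in>Rp. k \<alpha> * (Du (x, t) (\<alpha>, 0) / (\<alpha> \<bullet> x)) * (e / ((\<alpha> \<bullet> x)\<^sup>2 + e)))"
  have eq1: "(\<Sum>b\<in>Basis. DGB d e b t x) =
      (\<Sum>b\<in>Basis. chi' d (sfun x t) * (- 2 * ((x - x0) \<bullet> b)) * wt e x * ut (x, t) * gx b (x, t))
    + (\<Sum>b\<in>Basis. psi d x t * dwt e b x * ut (x, t) * gx b (x, t))
    + (\<Sum>b\<in>Basis. psi d x t * wt e x * D2u (x, t) (b, 0) (0, 1) * gx b (x, t))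
    + (\<Sum>b\<in>Basis. psi d x t * wt e x * ut (x, t) * D2u (x, t) (b, 0) (b, 0))"
    unfolding DGB_def by (simp only: sum.distrib)
  have a1: "(\<Sum>b\<in>Basis. chi' d (sfun x t) * (- 2 * ((x - x0) \<bullet> b)) * wt e x * ut (x, t) * gx b (x, t))
      = (- 2 * c' * w * u1) * S1"
    unfolding S1_def by (rule sum_factor) (simp add: c'_def w_def u1_def)
  have dsum: "(\<Sum>b\<in>Basis. dwt e b x * gx b (x, t)) = w * Sr"
  proof -
    have "(\<Sum>b\<in>Basis. dwt e b x * gx b (x, t))
        = w * (\<Sum>b\<in>Basis. \<Sum>\<alpha>\<in>Rp. k \<alpha> * (2 * (\<alpha> \<bullet> x) / ((\<alpha> \<bullet> x)\<^sup>2 + e)) * ((\<alpha> \<bullet> b) * gx b (x, t)))"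
      by (rule sum_factor) (simp add: dwt_def w_def sum_distrib_right sum_distrib_left algebra_simps)
    also have "(\<Sum>b\<in>Basis. \<Sum>\<alpha>\<in>Rp. k \<alpha> * (2 * (\<alpha> \<bullet> x) / ((\<alpha> \<bullet> x)\<^sup>2 + e)) * ((\<alpha> \<bullet> b) * gx b (x, t)))
        = (\<Sum>\<alpha>\<in>Rp. \<Sum>b\<in>Basis. k \<alpha> * (2 * (\<alpha> \<bullet> x) / ((\<alpha> \<bullet> x)\<^sup>2 + e)) * ((\<alpha> \<bullet> b) * gx b (x, t)))"
      by (rule sum.swap)
    also have "\<dots> = Sr"
      unfolding Sr_def
    proof (rule sum.cong[OF refl])
      fix \<alpha> assume "\<alpha> \<in> Rp"
      have "(\<Sum>b\<in>Basis. k \<alpha> * (2 * (\<alpha> \<bullet> x) / ((\<alpha> \<bullet> x)\<^sup>2 + e)) * ((\<alpha> \<bullet> b) * gx b (x, t)))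
          = (k \<alpha> * (2 * (\<alpha> \<bullet> x) / ((\<alpha> \<bullet> x)\<^sup>2 + e))) * (\<Sum>b\<in>Basis. (\<alpha> \<bullet> b) * gx b (x, t))"
        by (rule sum_factor) simp
      also have "(\<Sum>b\<in>Basis. (\<alpha> \<bullet> b) * gx b (x, t)) = Du (x, t) (\<alpha>, 0)"
        using Du_basis[of \<alpha> "(x, t)"] by (simp add: gx_def)
      finally show "(\<Sum>b\<in>Basis. k \<alpha> * (2 * (\<alpha> \<bullet> x) / ((\<alpha> \<bullet> x)\<^sup>2 + e)) * ((\<alpha> \<bullet> b) * gx b (x, t)))
          = k \<alpha> * (2 * (\<alpha> \<bullet> x) / ((\<alpha> \<bullet> x)\<^sup>2 + e)) * Du (x, t) (\<alpha>, 0)" .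
    qed
    finally show ?thesis .
  qed
  have a2: "(\<Sum>b\<in>Basis. psi d x t * dwt e b x * ut (x, t) * gx b (x, t)) = ps * u1 * w * Sr"
  proof -
    have "(\<Sum>b\<in>Basis. psi d x t * dwt e b x * ut (x, t) * gx b (x, t)) = (ps * u1) * (\<Sum>b\<in>Basis. dwt e b x * gx b (x, t))"
      by (rule sum_factor) (simp add: ps_def u1_def)
    then show ?thesis using dsum by simp
  qed
  have a3: "(\<Sum>b\<in>Basis. psi d x t * wt e x * D2u (x, t) (b, 0) (0, 1) * gx b (x, t)) = (ps * w) * S3"
    unfolding S3_def by (rule sum_factor) (simp add: ps_def w_def)
  have a4: "(\<Sum>b\<in>Basis. psi d x t * wt e x * ut (x, t) * D2u (x, t) (b, 0) (b, 0)) = (ps * w * u1) * lap"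
    unfolding lap_def by (rule sum_factor) (simp add: ps_def w_def u1_def)
  have entq: "ent (x, t) = 2 * u1 * U + 2 * S3"
  proof -
    have "(\<Sum>b\<in>Basis. gx b (x, t) * D2u (x, t) (0, 1) (b, 0)) = S3"
      unfolding S3_def using sym[OF xt] by (simp add: mult.commute)
    then show ?thesis by (simp add: ent_def u1_def U_def)
  qed
  have E: "lap + 2 * Sq - U = 0" using eqn[OF subsetD[OF IC_sub xt] gd] by (simp add: lap_def Sq_def U_def)
  have SqSr: "2 * Sq - Sr = 2 * Se"
  proof -
    have "2 * Sq - Sr = (\<Sum>\<alpha>\<in>Rp. 2 * (k \<alpha> * Du (x, t) (\<alpha>, 0) / (\<alpha> \<bullet> x)) - k \<alpha> * (2 * (\<alpha> \<bullet> x) / ((\<alpha> \<bullet> x)\<^sup>2 + e)) * Du (x, t) (\<alpha>, 0))"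
      by (simp add: Sq_def Sr_def sum_subtractf sum_distrib_left)
    also have "\<dots> = (\<Sum>\<alpha>\<in>Rp. 2 * (k \<alpha> * (Du (x, t) (\<alpha>, 0) / (\<alpha> \<bullet> x)) * (e / ((\<alpha> \<bullet> x)\<^sup>2 + e))))"
    proof (rule sum.cong[OF refl])
      fix \<alpha> assume a: "\<alpha> \<in> Rp"
      have ax: "\<alpha> \<bullet> x \<noteq> 0" using gd a by (auto simp: good_def)
      have pe: "(\<alpha> \<bullet> x)\<^sup>2 + e \<noteq> 0" using e by (metis add_nonneg_pos less_irrefl zero_le_power2)
      show "2 * (k \<alpha> * Du (x, t) (\<alpha>, 0) / (\<alpha> \<bullet> x)) - k \<alpha> * (2 * (\<alpha> \<bullet> x) / ((\<alpha> \<bullet> x)\<^sup>2 + e)) * Du (x, t) (\<alpha>, 0)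
          = 2 * (k \<alpha> * (Du (x, t) (\<alpha>, 0) / (\<alpha> \<bullet> x)) * (e / ((\<alpha> \<bullet> x)\<^sup>2 + e)))"
        using ax pe by (simp add: field_simps power2_eq_square)
    qed
    also have "\<dots> = 2 * Se" by (simp add: Se_def sum_distrib_left)
    finally show ?thesis .
  qed
  have "fxE d e t x = c' * (- 2 * (t0 - t)) * w * en (x, t) + ps * w * (2 * u1 * U + 2 * S3)"
    by (simp add: fxE_def c'_def w_def ps_def entq)
  moreover have "(\<Sum>b\<in>Basis. DGB d e b t x) = (- 2 * c' * w * u1) * S1 + ps * u1 * w * Sr + (ps * w) * S3 + (ps * w * u1) * lap"
    using eq1 a1 a2 a3 a4 by simp
  ultimately have "fxE d e t x - 2 * (\<Sum>b\<in>Basis. DGB d e b t x) =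
      - 2 * c' * w * ((t0 - t) * en (x, t) - 2 * u1 * S1) + 2 * ps * w * u1 * (U - lap) - 2 * ps * u1 * w * Sr"
    by (simp add: algebra_simps)
  also have "U - lap = 2 * Sq" using E by simp
  also have "- 2 * c' * w * ((t0 - t) * en (x, t) - 2 * u1 * S1) + 2 * ps * w * u1 * (2 * Sq) - 2 * ps * u1 * w * Sr
      = - 2 * c' * w * ((t0 - t) * en (x, t) - 2 * u1 * S1) + 2 * ps * w * u1 * (2 * Sq - Sr)"
    by (simp add: algebra_simps)
  also have "\<dots> = - 2 * c' * w * ((t0 - t) * en (x, t) - 2 * u1 * S1) + 4 * ps * w * u1 * Se"
    by (simp add: SqSr)
  finally show ?thesis by (simp add: c'_def w_def u1_def S1_def ps_def Se_def)
qed

end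

context dsetup begin

definition beta :: "real \<Rightarrow> 'a \<Rightarrow> real" where "beta e x = (\<Sum>\<alpha>\<in>Rp. e / ((\<alpha> \<bullet> x)\<^sup>2 + e))"

lemma beta_nonneg: "0 < e \<Longrightarrow> 0 \<le> beta e x"
  unfolding beta_def by (intro sum_nonneg) (simp add: add_nonneg_pos)

lemma wt_mono: "0 < e \<Longrightarrow> e \<le> 1 \<Longrightarrow> wt e x \<le> wt 1 x"
  unfolding wt_def
proof (subst exp_le_cancel_iff, rule sum_mono)
  fix \<alpha> assume a: "\<alpha> \<in> Rp" and e: "0 < e" "e \<le> 1"
  have "ln ((\<alpha> \<bullet> x)\<^sup>2 + e) \<le> ln ((\<alpha> \<bullet> x)\<^sup>2 + 1)"
    using e by (subst ln_le_cancel_iff) (auto simp: add_nonneg_pos)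
  then show "k \<alpha> * ln ((\<alpha> \<bullet> x)\<^sup>2 + e) \<le> k \<alpha> * ln ((\<alpha> \<bullet> x)\<^sup>2 + 1)"
    using k_nonneg a Rp_sub by (intro mult_left_mono) auto
qed

lemma psi_bound:
  assumes "0 \<le> t" "t \<le> t0" "0 < d"
  shows "psi d x t \<le> (t0\<^sup>2)\<^sup>2"
proof -
  have "sfun x t \<le> (t0 - t)\<^sup>2" by (simp add: sfun_def)
  also have "\<dots> \<le> t0\<^sup>2" using assms by (intro power_mono) auto
  finally have s: "sfun x t \<le> t0\<^sup>2" .
  have "max (sfun x t - d) 0 \<le> t0\<^sup>2" using s assms by auto
  then have "(max (sfun x t - d) 0)\<^sup>2 \<le> (t0\<^sup>2)\<^sup>2" by (rule power_mono) simp
  then show ?thesis by (simp add: psi_def chi_def)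
qed

lemma err_const:
  assumes d: "0 < d" and T: "T < t0"
  shows "\<exists>C\<ge>0. \<forall>e x t. 0 < e \<longrightarrow> e \<le> 1 \<longrightarrow> 0 < t \<longrightarrow> t \<le> T \<longrightarrow> good x \<longrightarrow> d \<le> sfun x t \<longrightarrow>
     \<bar>4 * psi d x t * wt e x * ut (x, t) * (\<Sum>\<alpha>\<in>Rp. k \<alpha> * (Du (x, t) (\<alpha>, 0) / (\<alpha> \<bullet> x)) * (e / ((\<alpha> \<bullet> x)\<^sup>2 + e)))\<bar>
       \<le> C * beta e x"
proof -
  obtain Cq where Cq: "Cq \<ge> 0" "\<forall>\<alpha>\<in>Rp. \<forall>x t. 0 < t \<longrightarrow> t \<le> T \<longrightarrow> d \<le> sfun x t \<longrightarrow> \<alpha> \<bullet> x \<noteq> 0 \<longrightarrow>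
      \<bar>k \<alpha> * Du (x, t) (\<alpha>, 0) / (\<alpha> \<bullet> x)\<bar> \<le> Cq"
    using q_bound[OF d T] by blast
  have cw: "continuous_on (cball x0 t0) (wt 1)" using cont_wt[of 1 "cball x0 t0" "\<lambda>x. x"] by simp
  obtain Bw where Bw: "Bw \<ge> 0" "\<forall>x\<in>cball x0 t0. norm (wt 1 x) \<le> Bw"
    using bound_cont[OF compact_cball cw] by blast
  have cK: "compact (Kset d T)" by (rule compact_Kset[OF d T])
  have sK: "Kset d T \<subseteq> LC" using Kset_LC[OF d T] by blast
  obtain Bu where Bu: "Bu \<ge> 0" "\<forall>p\<in>Kset d T. norm (Du p) \<le> Bu"
    using bound_cont[OF cK continuous_on_subset[OF cDu sK]] by blast
  define C where "C = 4 * (t0\<^sup>2)\<^sup>2 * Bw * Bu * Cq"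
  have C0: "C \<ge> 0" using Bw Bu Cq by (simp add: C_def)
  have "\<bar>4 * psi d x t * wt e x * ut (x, t) * (\<Sum>\<alpha>\<in>Rp. k \<alpha> * (Du (x, t) (\<alpha>, 0) / (\<alpha> \<bullet> x)) * (e / ((\<alpha> \<bullet> x)\<^sup>2 + e)))\<bar>
       \<le> C * beta e x"
    if e: "0 < e" "e \<le> 1" and t: "0 < t" "t \<le> T" and gd: "good x" and s: "d \<le> sfun x t" for e x t
  proof -
    have sp: "0 < sfun x t" using d s by simp
    have nx: "norm (x - x0) < t0 - t" using sfun_pos_norm[OF sp] t T by simp
    have xc: "x \<in> cball x0 t0" using nx t by (simp add: dist_norm norm_minus_commute)
    have xK: "(x, t) \<in> Kset d T" using t s by (simp add: Kset_def)
    have p1: "0 \<le> psi d x t" "psi d x t \<le> (t0\<^sup>2)\<^sup>2"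
      using psi_bound[of t d x] t T d by (auto simp: psi_def chi_nonneg)
    have w1: "0 \<le> wt e x" "wt e x \<le> Bw"
      using wt_pos[of e x] wt_mono[OF e, of x] Bw(2) xc by force+
    have u1: "\<bar>ut (x, t)\<bar> \<le> Bu"
    proof -
      have "\<bar>ut (x, t)\<bar> \<le> norm (Du (x, t)) * norm (0::'a, 1::real)"
        unfolding ut_def using norm_blinfun[of "Du (x, t)" "(0, 1)"] by simp
      also have "\<dots> = norm (Du (x, t))" by (simp add: norm_Pair)
      also have "\<dots> \<le> Bu" using Bu xK by auto
      finally show ?thesis .
    qed
    have se: "\<bar>\<Sum>\<alpha>\<in>Rp. k \<alpha> * (Du (x, t) (\<alpha>, 0) / (\<alpha> \<bullet> x)) * (e / ((\<alpha> \<bullet> x)\<^sup>2 + e))\<bar> \<le> Cq * beta e x"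
    proof -
      have "\<bar>\<Sum>\<alpha>\<in>Rp. k \<alpha> * (Du (x, t) (\<alpha>, 0) / (\<alpha> \<bullet> x)) * (e / ((\<alpha> \<bullet> x)\<^sup>2 + e))\<bar>
          \<le> (\<Sum>\<alpha>\<in>Rp. \<bar>k \<alpha> * (Du (x, t) (\<alpha>, 0) / (\<alpha> \<bullet> x)) * (e / ((\<alpha> \<bullet> x)\<^sup>2 + e))\<bar>)"
        by (rule sum_abs)
      also have "\<dots> \<le> (\<Sum>\<alpha>\<in>Rp. Cq * (e / ((\<alpha> \<bullet> x)\<^sup>2 + e)))"
      proof (rule sum_mono)
        fix \<alpha> assume a: "\<alpha> \<in> Rp"
        have ax: "\<alpha> \<bullet> x \<noteq> 0" using gd a by (auto simp: good_def)
        have q: "\<bar>k \<alpha> * Du (x, t) (\<alpha>, 0) / (\<alpha> \<bullet> x)\<bar> \<le> Cq" using Cq(2) a t s ax by blast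
        have r: "0 \<le> e / ((\<alpha> \<bullet> x)\<^sup>2 + e)" using e by (simp add: add_nonneg_pos)
        have "\<bar>k \<alpha> * (Du (x, t) (\<alpha>, 0) / (\<alpha> \<bullet> x)) * (e / ((\<alpha> \<bullet> x)\<^sup>2 + e))\<bar>
            = \<bar>k \<alpha> * Du (x, t) (\<alpha>, 0) / (\<alpha> \<bullet> x)\<bar> * (e / ((\<alpha> \<bullet> x)\<^sup>2 + e))"
        proof -
          have eqx: "k \<alpha> * (Du (x, t) (\<alpha>, 0) / (\<alpha> \<bullet> x)) * (e / ((\<alpha> \<bullet> x)\<^sup>2 + e))
            = (k \<alpha> * Du (x, t) (\<alpha>, 0) / (\<alpha> \<bullet> x)) * (e / ((\<alpha> \<bullet> x)\<^sup>2 + e))" by simp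
          show ?thesis unfolding eqx abs_mult abs_of_nonneg[OF r] ..
        qed
        also have "\<dots> \<le> Cq * (e / ((\<alpha> \<bullet> x)\<^sup>2 + e))" using q r by (rule mult_right_mono)
        finally show "\<bar>k \<alpha> * (Du (x, t) (\<alpha>, 0) / (\<alpha> \<bullet> x)) * (e / ((\<alpha> \<bullet> x)\<^sup>2 + e))\<bar> \<le> Cq * (e / ((\<alpha> \<bullet> x)\<^sup>2 + e))" .
      qed
      also have "\<dots> = Cq * beta e x" by (simp add: beta_def sum_distrib_left)
      finally show ?thesis .
    qed
    have "\<bar>4 * psi d x t * wt e x * ut (x, t) * (\<Sum>\<alpha>\<in>Rp. k \<alpha> * (Du (x, t) (\<alpha>, 0) / (\<alpha> \<bullet> x)) * (e / ((\<alpha> \<bullet> x)\<^sup>2 + e)))\<bar>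
        = 4 * psi d x t * wt e x * \<bar>ut (x, t)\<bar> * \<bar>\<Sum>\<alpha>\<in>Rp. k \<alpha> * (Du (x, t) (\<alpha>, 0) / (\<alpha> \<bullet> x)) * (e / ((\<alpha> \<bullet> x)\<^sup>2 + e))\<bar>"
      using p1 w1 by (simp add: abs_mult)
    also have "\<dots> \<le> 4 * (t0\<^sup>2)\<^sup>2 * Bw * Bu * (Cq * beta e x)"
      using p1 w1 u1 se Bw Bu by (intro mult_mono) auto
    also have "\<dots> = C * beta e x" by (simp add: C_def)
    finally show ?thesis .
  qed
  then show ?thesis using C0 by blast
qed

lemma ineq_ex:
  assumes d: "0 < d" and T: "T < t0"
  shows "\<exists>C\<ge>0. \<forall>e x t. 0 < e \<longrightarrow> e \<le> 1 \<longrightarrow> 0 < t \<longrightarrow> t \<le> T \<longrightarrow> good x \<longrightarrow>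
     fxE d e t x - 2 * (\<Sum>b\<in>Basis. DGB d e b t x) \<le> C * beta e x"
proof -
  obtain C where C: "C \<ge> 0" "\<forall>e x t. 0 < e \<longrightarrow> e \<le> 1 \<longrightarrow> 0 < t \<longrightarrow> t \<le> T \<longrightarrow> good x \<longrightarrow> d \<le> sfun x t \<longrightarrow>
     \<bar>4 * psi d x t * wt e x * ut (x, t) * (\<Sum>\<alpha>\<in>Rp. k \<alpha> * (Du (x, t) (\<alpha>, 0) / (\<alpha> \<bullet> x)) * (e / ((\<alpha> \<bullet> x)\<^sup>2 + e)))\<bar>
       \<le> C * beta e x"
    using err_const[OF d T] by blast
  have "fxE d e t x - 2 * (\<Sum>b\<in>Basis. DGB d e b t x) \<le> C * beta e x"
    if e: "0 < e" "e \<le> 1" and t: "0 < t" "t \<le> T" and gd: "good x" for e x t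
  proof (cases "d \<le> sfun x t")
    case True
    have sp: "0 < sfun x t" using d True by simp
    have nx: "norm (x - x0) \<le> t0 - t" using sfun_pos_norm[OF sp] t T by simp
    have Q: "- 2 * chi' d (sfun x t) * wt e x * ((t0 - t) * en (x, t) - 2 * ut (x, t) * (\<Sum>b\<in>Basis. ((x - x0) \<bullet> b) * gx b (x, t))) \<le> 0"
      by (rule Q_le[OF chi'_nonneg wt_pos nx])
    have Er: "4 * psi d x t * wt e x * ut (x, t) * (\<Sum>\<alpha>\<in>Rp. k \<alpha> * (Du (x, t) (\<alpha>, 0) / (\<alpha> \<bullet> x)) * (e / ((\<alpha> \<bullet> x)\<^sup>2 + e)))
       \<le> C * beta e x"
      using C(2) e t gd True by fastforce
    show ?thesis using ptwise[OF d e(1) T t gd True] Q Er by linarith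
  next
    case False
    then have "fxE d e t x = 0" "\<And>b. DGB d e b t x = 0"
      by (auto simp: fxE_def DGB_def psi_def chi_zero chi'_zero)
    then show ?thesis using C(1) beta_nonneg[OF e(1), of x] by simp
  qed
  then show ?thesis using C(1) by blast
qed

end

lemma in_box: "norm (x::'a::euclidean_space) \<le> c \<Longrightarrow> x \<in> cbox (-(c *\<^sub>R One)) (c *\<^sub>R One)"
  by (auto simp: mem_box dest: order_trans[OF Basis_le_norm] abs_le_D1 abs_le_D2)

context dsetup begin

definition cc where "cc = norm x0 + t0 + 1"
definition Bx where "Bx = cbox (-(cc *\<^sub>R One)) (cc *\<^sub>R (One::'a))"

lemma far_zero:
  assumes "norm x > norm x0 + t0" "0 \<le> t" "t \<le> t0" "0 < d"
  shows "sfun x t < d"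
proof -
  have "norm x \<le> norm (x - x0) + norm x0" using norm_triangle_ineq[of "x - x0" x0] by simp
  then have n: "norm (x - x0) > t0" using assms(1) by linarith
  have "(t0 - t)\<^sup>2 \<le> t0\<^sup>2" using assms by (intro power_mono) auto
  moreover have "t0\<^sup>2 < (norm (x - x0))\<^sup>2" using n t0 by (intro power_strict_mono) auto
  ultimately show ?thesis using assms(4) by (simp add: sfun_def)
qed

lemma GB_far: "0 < d \<Longrightarrow> 0 \<le> t \<Longrightarrow> t \<le> t0 \<Longrightarrow> x \<notin> cball 0 (norm x0 + t0) \<Longrightarrow> GB d e b t x = 0"
  using far_zero[of x t d] by (simp add: GB_def psi_def chi_zero)

lemma DGB_far: "0 < d \<Longrightarrow> 0 \<le> t \<Longrightarrow> t \<le> t0 \<Longrightarrow> x \<notin> cball 0 (norm x0 + t0) \<Longrightarrow> DGB d e b t x = 0"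
  using far_zero[of x t d] by (simp add: DGB_def psi_def chi_zero chi'_zero)

lemma int_DGB:
  assumes d: "0 < d" and e: "0 < e" and T: "T < t0" and t: "0 < t" "t \<le> T" and b: "b \<in> Basis"
  shows "DGB d e b t integrable_on Bx" "integral Bx (DGB d e b t) = 0"
proof -
  have tt: "0 \<le> t" "t \<le> T" using t by auto
  have cD: "continuous_on UNIV (DGB d e b t)" by (rule C_DGB[OF d e T tt])
  obtain B where B: "B \<ge> 0" "\<forall>x\<in>cball 0 (norm x0 + t0). norm (DGB d e b t x) \<le> B"
    using bound_cont[OF compact_cball continuous_on_subset[OF cD]] by blast
  have bnd: "\<bar>DGB d e b t x\<bar> \<le> B" for x
    using B DGB_far[OF d, of t x e b] t T by (cases "x \<in> cball 0 (norm x0 + t0)") auto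
  have box: "cball 0 (norm x0 + t0 + norm b) \<subseteq> Bx"
    using b by (auto simp: Bx_def cc_def intro!: in_box)
  have supp: "\<And>x. x \<notin> cball 0 (norm x0 + t0) \<Longrightarrow> GB d e b t x = 0"
    using GB_far[OF d, of t] t T by auto
  note L = integral_dir_deriv_zero[OF C_GB[OF d e T tt] supp E3[OF d e T t] bnd box[unfolded Bx_def]]
  show "DGB d e b t integrable_on Bx" using L(1) by (simp add: Bx_def)
  show "integral Bx (DGB d e b t) = 0" using L(2) by (simp add: Bx_def)
qed

lemma cont_fxE_x:
  assumes d: "0 < d" and e: "0 < e" and T: "T < t0" and t: "0 \<le> t" "t \<le> T"
  shows "continuous_on UNIV (fxE d e t)"
proof -
  have "continuous_on UNIV ((\<lambda>(t, x). fxE d e t x) \<circ> (\<lambda>x. (t, x)))"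
    by (rule continuous_on_compose[OF _ continuous_on_subset[OF C_fxE[OF d e T]]]) (use t in \<open>auto intro!: continuous_intros\<close>)
  then show ?thesis by (simp add: o_def)
qed

lemma cont_beta: "0 < e \<Longrightarrow> continuous_on S (beta e)"
proof -
  assume e: "0 < e"
  have ne: "\<And>z::real. z\<^sup>2 + e \<noteq> 0" using e by (metis add_nonneg_pos less_irrefl zero_le_power2)
  show ?thesis unfolding beta_def[abs_def] by (intro continuous_intros) (use ne in auto)
qed

lemma int_fxE_le:
  assumes d: "0 < d" and e: "0 < e" "e \<le> 1" and T: "T < t0" and t: "0 < t" "t \<le> T"
    and C: "C \<ge> 0" "\<forall>e x t. 0 < e \<longrightarrow> e \<le> 1 \<longrightarrow> 0 < t \<longrightarrow> t \<le> T \<longrightarrow> good x \<longrightarrow>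
     fxE d e t x - 2 * (\<Sum>b\<in>Basis. DGB d e b t x) \<le> C * beta e x"
  shows "integral Bx (fxE d e t) \<le> C * integral Bx (beta e)"
proof -
  have tt: "0 \<le> t" "t \<le> T" using t by auto
  have iF: "fxE d e t integrable_on Bx"
    unfolding Bx_def by (rule integrable_continuous) (rule continuous_on_subset[OF cont_fxE_x[OF d e(1) T tt]], simp)
  have iD: "\<And>b. b \<in> Basis \<Longrightarrow> DGB d e b t integrable_on Bx" using int_DGB[OF d e(1) T t] by blast
  have iS: "(\<lambda>x. \<Sum>b\<in>Basis. DGB d e b t x) integrable_on Bx" by (rule integrable_sum) (auto intro: iD)
  have iS2: "(\<lambda>x. 2 * (\<Sum>b\<in>Basis. DGB d e b t x)) integrable_on Bx" using integrable_cmul[OF iS, of 2] by simp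
  have zS: "integral Bx (\<lambda>x. \<Sum>b\<in>Basis. DGB d e b t x) = 0"
    using integral_sum[of Basis "\<lambda>b. DGB d e b t" Bx] iD int_DGB(2)[OF d e(1) T t] by simp
  define F where "F x = fxE d e t x - 2 * (\<Sum>b\<in>Basis. DGB d e b t x)" for x
  have iFF: "F integrable_on Bx" unfolding F_def by (rule integrable_diff[OF iF iS2])
  have IF: "integral Bx (fxE d e t) = integral Bx F"
  proof -
    have "integral Bx F = integral Bx (fxE d e t) - integral Bx (\<lambda>x. 2 * (\<Sum>b\<in>Basis. DGB d e b t x))"
      unfolding F_def by (rule integral_diff[OF iF iS2])
    also have "integral Bx (\<lambda>x. 2 * (\<Sum>b\<in>Basis. DGB d e b t x)) = 2 * integral Bx (\<lambda>x. \<Sum>b\<in>Basis. DGB d e b t x)"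
      by simp
    finally show ?thesis using zS by simp
  qed
  define F' where "F' x = (if good x then F x else C * beta e x)" for x
  have IF': "integral Bx F = integral Bx F'"
    by (rule integral_spike[OF negl_bad]) (auto simp: F'_def)
  have iF': "F' integrable_on Bx"
    by (rule integrable_spike[OF iFF negl_bad]) (auto simp: F'_def)
  have iB: "beta e integrable_on Bx"
    unfolding Bx_def by (rule integrable_continuous) (rule cont_beta[OF e(1)])
  have iCB: "(\<lambda>x. C * beta e x) integrable_on Bx" using integrable_cmul[OF iB, of C] by simp
  have "integral Bx F' \<le> integral Bx (\<lambda>x. C * beta e x)"
  proof (rule integral_le[OF iF' iCB])
    fix x show "F' x \<le> C * beta e x" using C(2) e t by (auto simp: F'_def F_def)
  qed
  also have "\<dots> = C * integral Bx (beta e)" by simp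
  finally show ?thesis using IF IF' by simp
qed

lemma gx0:
  assumes "norm (x - x0) < t0"
  shows "Du (x, 0) (b, 0) = 0"
proof -
  define X where "X = {r. norm (x + r *\<^sub>R b - x0) \<le> t0}"
  define N where "N = {r. norm (x + r *\<^sub>R b - x0) < t0}"
  have oN: "open N" unfolding N_def by (intro open_Collect_less continuous_intros)
  have N0: "0 \<in> N" using assms by (simp add: N_def)
  have NX: "N \<subseteq> X" by (auto simp: N_def X_def)
  have xL: "(x, 0) \<in> LC" using assms by (simp add: light_cone_def)
  have D: "(u has_derivative blinfun_apply (Du (x, 0))) (at ((x, 0) + 0 *\<^sub>R (b, 0)) within LC)"
    using du xL by simp
  have "((\<lambda>r. u ((x, 0) + r *\<^sub>R (b, 0))) has_real_derivative Du (x, 0) (b, 0)) (at 0 within X)"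
    by (rule line_deriv_within[OF D _ bounded_linear.linear[OF blinfun.bounded_linear_right]])
       (use N0 in \<open>auto simp: X_def light_cone_def N_def\<close>)
  moreover have "at (0::real) within X = at 0" by (rule at_within_open_subset[OF N0 oN NX])
  ultimately have d1: "((\<lambda>r. u (x + r *\<^sub>R b, 0)) has_real_derivative Du (x, 0) (b, 0)) (at 0)" by simp
  have "((\<lambda>r. 0) has_real_derivative 0) (at (0::real))" by simp
  then have d2: "((\<lambda>r. u (x + r *\<^sub>R b, 0)) has_real_derivative 0) (at 0)"
    by (rule has_field_derivative_transform_within_open[OF _ oN N0]) (use init in \<open>auto simp: N_def\<close>)
  show ?thesis using DERIV_unique[OF d1 d2] .
qed

lemma fE0: "0 < d \<Longrightarrow> fE d e 0 x = 0"
proof -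
  assume d: "0 < d"
  show ?thesis
  proof (cases "sfun x 0 < d")
    case True then show ?thesis by (simp add: fE_def psi_def chi_zero)
  next
    case False
    then have "0 < sfun x 0" using d by simp
    then have n: "norm (x - x0) < t0" using sfun_pos_norm[of x 0] t0 by simp
    have "ut (x, 0) = 0" using init n by (simp add: ut_def)
    moreover have "gx b (x, 0) = 0" for b using gx0[OF n] by (simp add: gx_def)
    ultimately show ?thesis by (simp add: fE_def en_def)
  qed
qed

end

context dsetup begin

lemma energy_le:
  assumes d: "0 < d" and T0: "0 < T" and T: "T < t0" and e: "0 < e" "e \<le> 1"
    and C: "C \<ge> 0" "\<forall>e x t. 0 < e \<longrightarrow> e \<le> 1 \<longrightarrow> 0 < t \<longrightarrow> t \<le> T \<longrightarrow> good x \<longrightarrow>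
     fxE d e t x - 2 * (\<Sum>b\<in>Basis. DGB d e b t x) \<le> C * beta e x"
    and t1: "0 < t1" "t1 \<le> T"
  shows "integral Bx (fE d e t1) \<le> t1 * (C * integral Bx (beta e))"
proof -
  define E where "E t = integral Bx (fE d e t)" for t
  have der: "(E has_real_derivative integral Bx (fxE d e t)) (at t within {0..T})" if t: "t \<in> {0..T}" for t
    unfolding E_def Bx_def
  proof (rule leibniz_rule_field_derivative[where f="\<lambda>t x. fE d e t x" and fx="\<lambda>t x. fxE d e t x"])
    show "\<And>x t. x \<in> {0..T} \<Longrightarrow> t \<in> cbox (- (cc *\<^sub>R One)) (cc *\<^sub>R One) \<Longrightarrow>
        ((\<lambda>x. fE d e x t) has_real_derivative fxE d e x t) (at x within {0..T})"
      by (rule E1[OF d T]) auto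
    show "\<And>x. x \<in> {0..T} \<Longrightarrow> fE d e x integrable_on cbox (- (cc *\<^sub>R One)) (cc *\<^sub>R One)"
      by (rule integrable_continuous, rule continuous_on_subset[OF C_fE[OF d e(1) T]]) auto
    show "continuous_on ({0..T} \<times> cbox (- (cc *\<^sub>R One)) (cc *\<^sub>R One)) (\<lambda>(x, t). fxE d e x t)"
      by (rule continuous_on_subset[OF C_fxE[OF d e(1) T]]) auto
  qed (use t in auto)
  have "\<exists>\<xi>\<in>{0<..<t1}. E t1 - E 0 = (\<lambda>h. h * integral Bx (fxE d e \<xi>)) (t1 - 0)"
  proof (rule mvt_simple[OF t1(1)])
    fix t assume "0 \<le> t" "t \<le> t1"
    then have "(E has_real_derivative integral Bx (fxE d e t)) (at t within {0..t1})"
      using has_field_derivative_subset[OF der] t1 by auto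
    then have "(E has_derivative (*) (integral Bx (fxE d e t))) (at t within {0..t1})"
      by (simp add: has_field_derivative_def)
    moreover have "(*) (integral Bx (fxE d e t)) = (\<lambda>h. h * integral Bx (fxE d e t))" by (auto simp: fun_eq_iff)
    ultimately show "(E has_derivative (\<lambda>h. h * integral Bx (fxE d e t))) (at t within {0..t1})" by simp
  qed
  then obtain \<xi> where xi: "0 < \<xi>" "\<xi> < t1" "E t1 - E 0 = t1 * integral Bx (fxE d e \<xi>)" by auto
  have "fE d e 0 = (\<lambda>x. 0)" using fE0[OF d] by (simp add: fun_eq_iff)
  then have "E 0 = 0" by (simp add: E_def)
  moreover have "integral Bx (fxE d e \<xi>) \<le> C * integral Bx (beta e)"
    by (rule int_fxE_le[OF d e T _ _ C]) (use xi t1 in auto)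
  ultimately show ?thesis using xi t1 unfolding E_def by (simp add: mult_left_mono)
qed

lemma beta_lim: "(\<lambda>n. integral Bx (beta (1 / real (Suc n)))) \<longlonglongrightarrow> 0"
proof -
  define f where "f n x = (if good x then beta (1 / real (Suc n)) x else 0)" for n x
  have eq: "integral Bx (beta (1 / real (Suc n))) = integral Bx (f n)" for n
    by (rule integral_spike[OF negl_bad]) (auto simp: f_def)
  have ib: "beta (1 / real (Suc n)) integrable_on Bx" for n
    unfolding Bx_def by (rule integrable_continuous, rule cont_beta) simp
  have fi: "f n integrable_on Bx" for n
    by (rule integrable_spike[OF ib negl_bad]) (auto simp: f_def)
  have hi: "(\<lambda>x. real (card Rp)) integrable_on Bx"
    unfolding Bx_def by (rule integrable_continuous, rule continuous_on_const)
  have fb: "norm (f n x) \<le> real (card Rp)" for n x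
  proof -
    have e: "0 < 1 / real (Suc n)" by simp
    have "beta (1 / real (Suc n)) x \<le> real (card Rp) * 1"
      unfolding beta_def
    proof (rule sum_bounded_above)
      fix \<alpha>
      define ee where "ee = 1 / real (Suc n)"
      have p: "0 < (\<alpha> \<bullet> x)\<^sup>2 + ee" using e unfolding ee_def by (simp add: add_nonneg_pos)
      have "ee / ((\<alpha> \<bullet> x)\<^sup>2 + ee) \<le> 1" using p by (simp add: pos_divide_le_eq)
      then show "1 / real (Suc n) / ((\<alpha> \<bullet> x)\<^sup>2 + 1 / real (Suc n)) \<le> 1" by (simp add: ee_def)
    qed
    then show ?thesis using beta_nonneg[OF e, of x] by (simp add: f_def)
  qed
  have fl: "(\<lambda>n. f n x) \<longlonglongrightarrow> 0" for x
  proof (cases "good x")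
    case True
    have "(\<lambda>n. \<Sum>\<alpha>\<in>Rp. 1 / real (Suc n) / ((\<alpha> \<bullet> x)\<^sup>2 + 1 / real (Suc n))) \<longlonglongrightarrow> (\<Sum>\<alpha>\<in>Rp. 0 / ((\<alpha> \<bullet> x)\<^sup>2 + 0))"
    proof (rule tendsto_sum)
      fix \<alpha> assume a: "\<alpha> \<in> Rp"
      have "(\<alpha> \<bullet> x)\<^sup>2 + 0 \<noteq> 0" using True a by (simp add: good_def)
      then show "(\<lambda>n. 1 / real (Suc n) / ((\<alpha> \<bullet> x)\<^sup>2 + 1 / real (Suc n))) \<longlonglongrightarrow> 0 / ((\<alpha> \<bullet> x)\<^sup>2 + 0)"
        by (intro tendsto_divide tendsto_add tendsto_const inv_Suc_lim)
    qed
    then show ?thesis using True by (simp add: f_def beta_def)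
  next
    case False then show ?thesis by (simp add: f_def)
  qed
  note dc = dominated_convergence[of f Bx "\<lambda>x. real (card Rp)" "\<lambda>x. 0", OF fi hi fb fl]
  show ?thesis using dc(2) eq by simp
qed

definition cw where "cw x = exp (\<Sum>\<alpha>\<in>Rp. k \<alpha> * ln ((\<alpha> \<bullet> x)\<^sup>2))"

lemma wt_ge_cw: "0 < e \<Longrightarrow> good x \<Longrightarrow> cw x \<le> wt e x"
  unfolding wt_def cw_def
proof (subst exp_le_cancel_iff, rule sum_mono)
  fix \<alpha> assume a: "\<alpha> \<in> Rp" and e: "0 < e" and g: "good x"
  have p: "0 < (\<alpha> \<bullet> x)\<^sup>2" using g a by (simp add: good_def)
  have "ln ((\<alpha> \<bullet> x)\<^sup>2) \<le> ln ((\<alpha> \<bullet> x)\<^sup>2 + e)"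
    using e p by (subst ln_le_cancel_iff) (auto intro: add_pos_pos)
  then show "k \<alpha> * ln ((\<alpha> \<bullet> x)\<^sup>2) \<le> k \<alpha> * ln ((\<alpha> \<bullet> x)\<^sup>2 + e)"
    using k_nonneg a Rp_sub by (intro mult_left_mono) auto
qed

lemma en_nonneg: "0 \<le> en p" by (simp add: en_def sum_nonneg)

lemma open_good: "open {x. good x}"
proof -
  have "{x. good x} = (\<Inter>\<alpha>\<in>Rp. {x. \<alpha> \<bullet> x \<noteq> 0})" by (auto simp: good_def)
  moreover have "open {x. \<alpha> \<bullet> x \<noteq> 0}" for \<alpha> :: 'a by (intro open_Collect_neq continuous_intros)
  ultimately show ?thesis using finRp by (auto intro: open_INT)
qed

end

context dsetup begin

lemma ut_zero_good:
  assumes xt: "(x1, t1) \<in> IC" and gd: "good x1"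
  shows "ut (x1, t1) = 0"
proof (rule ccontr)
  assume ne: "ut (x1, t1) \<noteq> 0"
  have t1p: "0 < t1" and n1: "norm (x1 - x0) < t0 - t1" using xt by (auto simp: IC_def)
  have T: "t1 < t0" using n1 norm_ge_zero[of "x1 - x0"] by linarith
  have "(norm (x1 - x0))\<^sup>2 < (t0 - t1)\<^sup>2" using n1 by (intro power_strict_mono) auto
  then have sp: "0 < sfun x1 t1" by (simp add: sfun_def)
  define d where "d = sfun x1 t1 / 2"
  have d: "0 < d" using sp by (simp add: d_def)
  obtain C where C: "C \<ge> 0" "\<forall>e x t. 0 < e \<longrightarrow> e \<le> 1 \<longrightarrow> 0 < t \<longrightarrow> t \<le> t1 \<longrightarrow> good x \<longrightarrow>
     fxE d e t x - 2 * (\<Sum>b\<in>Basis. DGB d e b t x) \<le> C * beta e x"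
    using ineq_ex[OF d T] by blast
  define g where "g y = psi d y t1 * cw y * en (y, t1)" for y
  have c1: "isCont (\<lambda>y. (y, t1)) x1" by (intro continuous_intros)
  have "isCont Du ((\<lambda>y. (y, t1)) x1)" using isCont_Du[OF xt] by simp
  from isCont_o2[OF c1 this] have cDx: "continuous (at x1) (\<lambda>y. Du (y, t1))" .
  have cpsi: "continuous (at x1) (\<lambda>y. psi d y t1)"
  proof -
    have "continuous_on UNIV (\<lambda>y. chi d (sfun y t1))" by (rule continuous_on_compose2[OF cont_chi cont_sfunx]) auto
    then show ?thesis by (simp add: psi_def continuous_on_eq_continuous_at)
  qed
  have ccw: "continuous (at x1) cw"
    unfolding cw_def[abs_def] by (intro continuous_intros) (use gd in \<open>auto simp: good_def\<close>)
  have cen: "continuous (at x1) (\<lambda>y. en (y, t1))"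
    unfolding en_def ut_def gx_def by (intro continuous_intros blinfun.continuous cDx)
  have cg: "continuous (at x1) g" unfolding g_def by (intro continuous_intros cpsi ccw cen)
  have "psi d x1 t1 = d\<^sup>2" using d by (simp add: psi_def chi_def d_def)
  moreover have "0 < en (x1, t1)"
  proof -
    have "0 < (ut (x1, t1))\<^sup>2" using ne by simp
    then show ?thesis by (simp add: en_def add_pos_nonneg sum_nonneg)
  qed
  ultimately have g0: "0 < g x1" using d by (simp add: g_def cw_def)
  define \<eta> where "\<eta> = g x1 / 2"
  have eta: "0 < \<eta>" using g0 by (simp add: \<eta>_def)
  obtain r1 where r1: "r1 > 0" "\<And>y. dist y x1 < r1 \<Longrightarrow> dist (g y) (g x1) < \<eta>"
    using cg eta unfolding continuous_at_eps_delta by blast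
  obtain r2 where r2: "r2 > 0" "ball x1 r2 \<subseteq> {x. good x}"
    using open_good gd open_contains_ball by blast
  define r where "r = min (min r1 r2) 1"
  have r: "0 < r" "r \<le> r1" "r \<le> r2" "r \<le> 1" using r1 r2 by (auto simp: r_def)
  define \<rho> where "\<rho> = r / (2 * real DIM('a))"
  have rho: "0 < \<rho>" using r by (simp add: \<rho>_def)
  define SB where "SB = cbox (x1 - \<rho> *\<^sub>R One) (x1 + \<rho> *\<^sub>R (One::'a))"
  have SBball: "dist y x1 < r" if y: "y \<in> SB" for y
  proof -
    have "norm (y - x1) \<le> (\<Sum>i\<in>Basis. \<bar>(y - x1) \<bullet> i\<bar>)" by (rule norm_le_l1)
    also have "\<dots> \<le> of_nat (card (Basis::'a set)) * \<rho>"
    proof (rule sum_bounded_above)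
      fix i :: 'a assume i: "i \<in> Basis"
      then show "\<bar>(y - x1) \<bullet> i\<bar> \<le> \<rho>" using y by (auto simp: SB_def mem_box inner_diff_left algebra_simps)
    qed
    also have "\<dots> = r / 2" using rho by (simp add: \<rho>_def)
    finally show ?thesis using r by (simp add: dist_norm)
  qed
  have SBBx: "SB \<subseteq> Bx"
  proof
    fix y assume y: "y \<in> SB"
    have "norm x1 \<le> norm x0 + norm (x1 - x0)" using norm_triangle_ineq[of x0 "x1 - x0"] by simp
    moreover have "norm y \<le> norm x1 + norm (y - x1)" using norm_triangle_ineq[of x1 "y - x1"] by simp
    moreover have "norm (y - x1) < 1" using SBball[OF y] r by (simp add: dist_norm)
    ultimately have "norm y \<le> cc" using n1 t1p by (simp add: cc_def)
    then show "y \<in> Bx" unfolding Bx_def by (rule in_box)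
  qed
  have cpos: "0 < measure lborel SB"
    unfolding SB_def by (rule content_pos_lt) (use rho in \<open>auto simp: inner_add_left inner_diff_left\<close>)
  have low: "\<eta> * measure lborel SB \<le> t1 * (C * integral Bx (beta (1 / real (Suc n))))" for n
  proof -
    define e where "e = 1 / real (Suc n)"
    have e: "0 < e" "e \<le> 1" by (auto simp: e_def field_simps)
    define ind where "ind y = (if y \<in> SB then \<eta> else 0)" for y
    have SBi: "SB \<inter> Bx = SB" using SBBx by auto
    have "(\<lambda>y. \<eta>) integrable_on SB" unfolding SB_def by (rule integrable_continuous, rule continuous_on_const)
    then have "(\<lambda>y. \<eta>) integrable_on SB \<inter> Bx" using SBi by simp
    then have iind: "ind integrable_on Bx" unfolding ind_def by (subst integrable_restrict_Int)
    have Iind: "integral Bx ind = measure lborel SB * \<eta>"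
      unfolding ind_def integral_restrict_Int SBi by (simp add: SB_def)
    have ifE: "fE d e t1 integrable_on Bx"
      unfolding Bx_def by (rule integrable_continuous, rule continuous_on_subset[OF C_fE[OF d e(1) T]]) (use t1p in auto)
    have "integral Bx ind \<le> integral Bx (fE d e t1)"
    proof (rule integral_le[OF iind ifE])
      fix y assume "y \<in> Bx"
      have fE_nn: "0 \<le> fE d e t1 y"
        using wt_pos[of e y] en_nonneg[of "(y, t1)"] by (simp add: fE_def psi_def chi_nonneg)
      show "ind y \<le> fE d e t1 y"
      proof (cases "y \<in> SB")
        case True
        have dy: "dist y x1 < r" using SBball[OF True] .
        have "y \<in> ball x1 r2" using dy r by (simp add: dist_commute)
        then have gy: "good y" using r2(2) by blast
        have "dist y x1 < r1" using dy r by linarith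
        then have "\<bar>g y - g x1\<bar> < \<eta>" using r1(2)[of y] by (simp add: dist_real_def)
        then have "g y > \<eta>" unfolding \<eta>_def by linarith
        moreover have "g y \<le> fE d e t1 y"
        proof -
          have "cw y \<le> wt e y" by (rule wt_ge_cw[OF e(1) gy])
          then have "psi d y t1 * cw y * en (y, t1) \<le> psi d y t1 * wt e y * en (y, t1)"
            using en_nonneg[of "(y, t1)"] by (intro mult_right_mono mult_left_mono) (auto simp: psi_def chi_nonneg)
          then show ?thesis by (simp add: g_def fE_def)
        qed
        ultimately show ?thesis using True by (simp add: ind_def)
      next
        case False then show ?thesis using fE_nn by (simp add: ind_def)
      qed
    qed
    also have "\<dots> \<le> t1 * (C * integral Bx (beta e))"
      by (rule energy_le[OF d t1p T e C _ order_refl]) (use t1p in simp)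
    finally show ?thesis using Iind by (simp add: e_def mult.commute)
  qed
  have "(\<lambda>n. t1 * (C * integral Bx (beta (1 / real (Suc n))))) \<longlonglongrightarrow> t1 * (C * 0)"
    by (intro tendsto_mult tendsto_const beta_lim)
  then have "\<eta> * measure lborel SB \<le> t1 * (C * 0)"
    by (rule LIMSEQ_le_const) (use low in auto)
  moreover have "0 < \<eta> * measure lborel SB" using eta cpos by (rule mult_pos_pos)
  ultimately show False by simp
qed

lemma ut_zero:
  assumes xt: "(x, t) \<in> IC"
  shows "ut (x, t) = 0"
proof -
  obtain \<beta>0 where b0: "\<forall>\<alpha>\<in>R. \<alpha> \<bullet> \<beta>0 \<noteq> 0" using ps by (auto simp: positive_subsystem_def)
  have "isCont (\<lambda>p. Du p (0, 1)) (x, t)" by (intro continuous_intros blinfun.continuous isCont_Du[OF xt])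
  moreover have "eventually (\<lambda>n. Du (x + (1 / real (Suc n)) *\<^sub>R \<beta>0, t) (0, 1) = 0) sequentially"
  proof -
    have e1: "eventually (\<lambda>n. (x + (1 / real (Suc n)) *\<^sub>R \<beta>0, t) \<in> IC) sequentially"
      by (rule ev_in_open[OF open_IC xt])
    have e2: "eventually (\<lambda>n. \<forall>\<alpha>\<in>Rp. \<alpha> \<bullet> (x + (1 / real (Suc n)) *\<^sub>R \<beta>0) \<noteq> 0) sequentially"
    proof (rule eventually_ball_finite[OF finRp], rule ballI)
      fix \<alpha> assume a: "\<alpha> \<in> Rp"
      have "\<alpha> \<bullet> \<beta>0 \<noteq> 0" using b0 a Rp_sub by auto
      then show "eventually (\<lambda>n. \<alpha> \<bullet> (x + (1 / real (Suc n)) *\<^sub>R \<beta>0) \<noteq> 0) sequentially"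
        using ev_nonzero[of "\<alpha> \<bullet> x" "\<alpha> \<bullet> \<beta>0"] by (simp add: inner_add_right)
    qed
    show ?thesis using e1 e2
    proof eventually_elim
      case (elim n)
      then show ?case using ut_zero_good[OF elim(1)] by (simp add: good_def ut_def)
    qed
  qed
  ultimately have "Du (x, t) (0, 1) = 0" using lim_zero[OF _ seq_lim_vec] by blast
  then show ?thesis by (simp add: ut_def)
qed

theorem u_zero: "\<forall>p\<in>LC. u p = 0"
proof
  fix p assume p: "p \<in> LC"
  obtain x t where pe: "p = (x, t)" by force
  have t: "0 \<le> t" and n: "norm (x - x0) \<le> t0 - t" using p by (auto simp: pe light_cone_def)
  have u0: "u (x, 0) = 0" using init n t by auto
  show "u p = 0"
  proof (cases "t = 0")
    case True then show ?thesis using u0 pe by simp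
  next
    case False
    then have tp: "0 < t" using t by simp
    have cont: "continuous_on {0..t} (\<lambda>s. u (x, s))"
      by (rule continuous_on_compose2[OF cu]) (use n in \<open>auto intro!: continuous_intros simp: light_cone_def\<close>)
    have der: "((\<lambda>s. u (x, s)) has_derivative (\<lambda>h. 0)) (at s)" if s: "0 < s" "s < t" for s
    proof -
      have sI: "(x, s) \<in> IC" using s n by (simp add: IC_def)
      have D: "(u has_derivative blinfun_apply (Du (x, s))) (at ((x, 0) + s *\<^sub>R (0, 1)) within UNIV)"
        using du_at[OF sI] by simp
      have "((\<lambda>r. u ((x, 0) + r *\<^sub>R (0, 1))) has_real_derivative Du (x, s) (0, 1)) (at s within UNIV)"
        by (rule line_deriv_within[OF D _ bounded_linear.linear[OF blinfun.bounded_linear_right]]) auto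
      then have "((\<lambda>r. u (x, r)) has_real_derivative 0) (at s)" using ut_zero[OF sI] by (simp add: ut_def)
      then have "((\<lambda>r. u (x, r)) has_derivative (*) 0) (at s)" by (simp add: has_field_derivative_def)
      moreover have "(*) (0::real) = (\<lambda>h. 0)" by auto
      ultimately show ?thesis by simp
    qed
    obtain \<xi> where "0 < \<xi>" "\<xi> < t" "u (x, t) - u (x, 0) = (\<lambda>h. 0) (t - 0)"
      using mvt[OF tp cont der] by metis
    then show ?thesis using u0 pe by simp
  qed
qed

end

theorem mainTheorem7:
  fixes R Rp :: "'a::euclidean_space set"
    and k :: "'a \<Rightarrow> real"
    and x0 :: 'a and t0 :: real
    and u :: "'a \<times> real \<Rightarrow> real"
    and Du :: "'a \<times> real \<Rightarrow> ('a \<times> real) \<Rightarrow>\<^sub>L real"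
    and D2u :: "'a \<times> real \<Rightarrow> ('a \<times> real) \<Rightarrow>\<^sub>L (('a \<times> real) \<Rightarrow>\<^sub>L real)"
  assumes "normalized_reduced_root_system R"
    and "positive_subsystem R Rp"
    and "multiplicity_function R k"
    and "t0 > 0"
    and "\<forall>p\<in>light_cone x0 t0. (u has_derivative blinfun_apply (Du p)) (at p within light_cone x0 t0)"
    and "\<forall>p\<in>light_cone x0 t0. (Du has_derivative blinfun_apply (D2u p)) (at p within light_cone x0 t0)"
    and "continuous_on (light_cone x0 t0) D2u"
    and "\<forall>p\<in>light_cone x0 t0. (\<forall>\<alpha>\<in>R. \<alpha> \<bullet> fst p \<noteq> 0) \<longrightarrow> dunkl_wave_op Rp k Du D2u p = 0"
    and "\<forall>x. norm (x - x0) \<le> t0 \<longrightarrow> u (x, 0) = 0 \<and> Du (x, 0) (0, 1) = 0"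
  shows "\<forall>p\<in>light_cone x0 t0. u p = 0"
  proof -
  interpret dsetup R Rp k x0 t0 u Du D2u
    by (rule dsetup.intro) (rule assms)+
  show ?thesis by (rule u_zero)
qed

end
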